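(* Let $m,n\ge1$, $\mathbf q=(q_1,\dots,q_m)\in(\mathbb C^* )^m$, and write $\mathbf t=(t_1,\dots,t_m)$, $\bar{\mathbf t}=(q_1t_1,\dots,q_mt_m)$, $\mathbf y=(y_1,\dots,y_n)$. Let $H=(H_1,\dots,H_n)$ be holomorphic at $(\mathbf t,\mathbf y)=(\mathbf 0,\mathbf Y)$ for some $\mathbf Y\in\mathbb C^n$ with $H(\mathbf 0,\mathbf Y)=\mathbf Y$, and suppose no eigenvalue of the Jacobian $D=\big(\frac{\partial H_j}{\partial y_k}(\mathbf 0,\mathbf Y)\big)_{j,k}$ lies in $Q=\{\mathbf q^\alpha:\alpha\in\mathbb N^m\setminus\{0\}\}$. Then the system $y_j(\bar{\mathbf t})=H_j(\mathbf t,\mathbf y(\mathbf t))$ ($1\le j\le n$) has a unique formal power series solution of the form $y_j(\mathbf t)=Y_j+\sum_{\alpha\in\mathbb N^m\setminus\{0\}}b^{(j)}_\alpha\mathbf t^\alpha$. If moreover no eigenvalue of $D$ is a limit point of $Q$, these power series converge in a neighbourhood of $\mathbf t=\mathbf 0$.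
   Context: Multi-index notation: for $\alpha\in\mathbb N^m$, $\mathbf q^\alpha=q_1^{\alpha_1}\cdots q_m^{\alpha_m}$ and $\mathbf t^\alpha=t_1^{\alpha_1}\cdots t_m^{\alpha_m}$. *)

theory Defs
  imports "HOL-Analysis.Analysis"
begin

text \<open>Multi-indices in m variables are functions 'm => nat over a finite index type 'm.
  A formal power series in the variables t_i (i :: 'm) is its coefficient function.\<close>

definition tpow :: "('i::finite \<Rightarrow> complex) \<Rightarrow> ('i \<Rightarrow> nat) \<Rightarrow> complex" where
  "tpow t \<alpha> = (\<Prod>i\<in>UNIV. t i ^ \<alpha> i)"

definition Qset :: "('m::finite \<Rightarrow> complex) \<Rightarrow> complex set" where
  "Qset q = {tpow q \<alpha> | \<alpha>. \<alpha> \<noteq> (\<lambda>_. 0)}"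

text \<open>Power series expansion of a function f of (t, y) around (0, Y):
  f(t,y) = sum over (beta,gamma) of cf beta gamma * t^beta * (y - Y)^gamma,
  absolutely convergent on the polydisc of radius r > 0. (A holomorphic function
  of several complex variables at a point is one having such an expansion; cf
  are its Taylor coefficients.)\<close>
definition power_series_at ::
  "(('m::finite \<Rightarrow> complex) \<Rightarrow> ('n::finite \<Rightarrow> complex) \<Rightarrow> complex)
   \<Rightarrow> (('m \<Rightarrow> nat) \<Rightarrow> ('n \<Rightarrow> nat) \<Rightarrow> complex) \<Rightarrow> ('n \<Rightarrow> complex) \<Rightarrow> real \<Rightarrow> bool" where
  "power_series_at f cf Y r \<longleftrightarrow> r > 0 \<and>
     (\<forall>t y. (\<forall>i. norm (t i) < r) \<and> (\<forall>k. norm (y k - Y k) < r) \<longrightarrow>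
        ((\<lambda>(\<beta>,\<gamma>). cf \<beta> \<gamma> * tpow t \<beta> * tpow (\<lambda>k. y k - Y k) \<gamma>) has_sum f t y) UNIV)"

text \<open>Coefficient of t^alpha in the formal product prod_k (u_k(t))^(gamma_k),
  where u_k are formal power series (Cauchy product written out).\<close>
definition mono_coeff ::
  "('n::finite \<Rightarrow> ('m::finite \<Rightarrow> nat) \<Rightarrow> complex) \<Rightarrow> ('n \<Rightarrow> nat) \<Rightarrow> ('m \<Rightarrow> nat) \<Rightarrow> complex" where
  "mono_coeff u \<gamma> \<alpha> =
     (let S = {(k, i). i < \<gamma> k} in
      \<Sum>\<delta>\<in>{\<delta> \<in> PiE S (\<lambda>_. {\<beta>. \<forall>i. \<beta> i \<le> \<alpha> i}). (\<lambda>i. \<Sum>p\<in>S. \<delta> p i) = \<alpha>}.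
         \<Prod>p\<in>S. u (fst p) (\<delta> p))"

text \<open>Coefficient of t^alpha in the formal substitution
  sum_{beta,gamma} cf beta gamma t^beta u(t)^gamma, for formal series u_k with zero
  constant term (then only finitely many (beta,gamma) contribute, namely those with
  beta <= alpha and |gamma| <= |alpha|).\<close>
definition comp_coeff ::
  "(('m::finite \<Rightarrow> nat) \<Rightarrow> ('n::finite \<Rightarrow> nat) \<Rightarrow> complex)
   \<Rightarrow> ('n \<Rightarrow> ('m \<Rightarrow> nat) \<Rightarrow> complex) \<Rightarrow> ('m \<Rightarrow> nat) \<Rightarrow> complex" where
  "comp_coeff cf u \<alpha> =
     (\<Sum>\<beta>\<in>{\<beta>. \<forall>i. \<beta> i \<le> \<alpha> i}. \<Sum>\<gamma>\<in>{\<gamma>. sum \<gamma> UNIV \<le> sum \<alpha> UNIV}.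
        cf \<beta> \<gamma> * mono_coeff u \<gamma> (\<lambda>i. \<alpha> i - \<beta> i))"

text \<open>b is a formal solution: y_j(t) = Y_j + sum_{alpha<>0} b j alpha t^alpha satisfies
  y_j(q_1 t_1,...,q_m t_m) = H_j(t, y(t)) coefficientwise, where H_j has Taylor
  coefficients c j at (0,Y).\<close>
definition formal_solution ::
  "('m::finite \<Rightarrow> complex) \<Rightarrow> ('n::finite \<Rightarrow> ('m \<Rightarrow> nat) \<Rightarrow> ('n \<Rightarrow> nat) \<Rightarrow> complex)
   \<Rightarrow> ('n \<Rightarrow> complex) \<Rightarrow> ('n \<Rightarrow> ('m \<Rightarrow> nat) \<Rightarrow> complex) \<Rightarrow> bool" where
  "formal_solution q c Y b \<longleftrightarrow>
     (\<forall>j. b j (\<lambda>_. 0) = 0) \<and>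
     (\<forall>j \<alpha>. (if \<alpha> = (\<lambda>_. 0) then Y j else 0) + tpow q \<alpha> * b j \<alpha> = comp_coeff (c j) b \<alpha>)"

definition is_eigenvalue :: "('n::finite \<Rightarrow> 'n \<Rightarrow> complex) \<Rightarrow> complex \<Rightarrow> bool" where
  "is_eigenvalue D \<mu> \<longleftrightarrow> (\<exists>v. v \<noteq> (\<lambda>_. 0) \<and> (\<forall>j. (\<Sum>k\<in>UNIV. D j k * v k) = \<mu> * v j))"

definition jacobian_y ::
  "('n::finite \<Rightarrow> ('m::finite \<Rightarrow> complex) \<Rightarrow> ('n \<Rightarrow> complex) \<Rightarrow> complex) \<Rightarrow> ('n \<Rightarrow> complex)
   \<Rightarrow> 'n \<Rightarrow> 'n \<Rightarrow> complex" where
  "jacobian_y H Y j k = deriv (\<lambda>z. H j (\<lambda>_. 0) (Y(k := z))) (Y k)"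

end

theory Submission
  imports Defs
begin


definition deg :: "('i::finite \<Rightarrow> nat) \<Rightarrow> nat" where "deg \<alpha> = sum \<alpha> UNIV"
definition ek :: "'n \<Rightarrow> 'n \<Rightarrow> nat" where "ek k = (\<lambda>l. if l = k then 1 else 0)"
definition Sset :: "('n::finite \<Rightarrow> nat) \<Rightarrow> ('n \<times> nat) set" where "Sset \<gamma> = {(k, i). i < \<gamma> k}"
definition IS :: "('n::finite \<Rightarrow> nat) \<Rightarrow> ('m::finite \<Rightarrow> nat) \<Rightarrow> ('n \<times> nat \<Rightarrow> 'm \<Rightarrow> nat) set" where
  "IS \<gamma> \<alpha> = {\<delta> \<in> PiE (Sset \<gamma>) (\<lambda>_. {\<beta>. \<forall>i. \<beta> i \<le> \<alpha> i}). (\<lambda>i. \<Sum>p\<in>Sset \<gamma>. \<delta> p i) = \<alpha>}"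

lemma mono_coeff_alt: "mono_coeff u \<gamma> \<alpha> = (\<Sum>\<delta>\<in>IS \<gamma> \<alpha>. \<Prod>p\<in>Sset \<gamma>. u (fst p) (\<delta> p))"
  unfolding mono_coeff_def IS_def Sset_def Let_def by simp

lemma Sset_Sigma: "Sset \<gamma> = Sigma UNIV (\<lambda>k. {..<\<gamma> k})"
  unfolding Sset_def by auto

lemma finite_Sset[simp]: "finite (Sset \<gamma>)"
  unfolding Sset_Sigma by auto

lemma card_Sset: "card (Sset \<gamma>) = deg \<gamma>"
  unfolding Sset_Sigma deg_def by (simp add: card_SigmaI)

lemma finite_le_set[simp]: "finite {\<beta>::'i::finite \<Rightarrow> nat. \<forall>i. \<beta> i \<le> \<alpha> i}"
proof -
  have "{\<beta>::'i \<Rightarrow> nat. \<forall>i. \<beta> i \<le> \<alpha> i} = PiE UNIV (\<lambda>i. {..\<alpha> i})"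
    by (auto simp: PiE_def extensional_def)
  then show ?thesis by (simp add: finite_PiE)
qed

lemma finite_IS[simp]: "finite (IS \<gamma> \<alpha>)"
  unfolding IS_def by (rule finite_subset[of _ "PiE (Sset \<gamma>) (\<lambda>_. {\<beta>. \<forall>i. \<beta> i \<le> \<alpha> i})"])
    (auto intro: finite_PiE)

lemma deg_le_mono: "(\<forall>i. \<beta> i \<le> \<alpha> i) \<Longrightarrow> deg \<beta> \<le> deg \<alpha>"
  unfolding deg_def by (simp add: sum_mono)

lemma finite_deg_le[simp]: "finite {\<beta>::'i::finite \<Rightarrow> nat. deg \<beta> \<le> N}"
proof (rule finite_subset[OF _ finite_le_set[of "\<lambda>_. N"]])
  show "{\<beta>::'i \<Rightarrow> nat. deg \<beta> \<le> N} \<subseteq> {\<beta>. \<forall>i. \<beta> i \<le> N}"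
  proof safe
    fix \<beta> :: "'i \<Rightarrow> nat" and i assume "deg \<beta> \<le> N"
    moreover have "\<beta> i \<le> deg \<beta>" unfolding deg_def by (rule member_le_sum) auto
    ultimately show "\<beta> i \<le> N" by simp
  qed
qed

lemma deg_zero_iff: "deg \<alpha> = 0 \<longleftrightarrow> \<alpha> = (\<lambda>_. 0)"
  unfolding deg_def by (auto simp: fun_eq_iff)

lemma deg_ek[simp]: "deg (ek k) = 1"
  unfolding deg_def ek_def by simp

lemma ek_inj: "inj ek"
  unfolding ek_def inj_def fun_eq_iff by (metis zero_neq_one)

lemma deg_one_ek: assumes "deg \<gamma> = 1" shows "\<gamma> = ek (SOME k. \<gamma> k \<noteq> 0)"
proof -
  from assms have "\<gamma> \<noteq> (\<lambda>_. 0)" using deg_zero_iff by force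
  then obtain k where k: "\<gamma> k \<noteq> 0" by auto
  have s: "deg \<gamma> = \<gamma> k + (\<Sum>l\<in>UNIV-{k}. \<gamma> l)" unfolding deg_def
    by (simp add: sum.remove)
  have "\<gamma> k = 1" using s assms k by linarith
  have "(\<Sum>l\<in>UNIV-{k}. \<gamma> l) = 0" using s assms k by linarith
  then have z: "\<forall>l\<in>UNIV-{k}. \<gamma> l = 0" by simp
  with \<open>\<gamma> k = 1\<close> have g: "\<gamma> = ek k" unfolding ek_def by (auto simp: fun_eq_iff)
  have gg: "\<forall>a. \<gamma> a \<noteq> 0 \<longleftrightarrow> a = k" using g by (simp add: ek_def)
  have "(SOME k. \<gamma> k \<noteq> 0) = k"
    by (rule some_equality) (use gg in auto)
  with g show ?thesis by simp
qed

lemma deg_one_range: "deg \<gamma> = 1 \<Longrightarrow> \<gamma> \<in> range ek"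
  using deg_one_ek by blast

lemma mono_coeff_zero: "mono_coeff u (\<lambda>_. 0) \<alpha> = (if \<alpha> = (\<lambda>_. 0) then 1 else 0)"
proof -
  have S: "Sset (\<lambda>_::'n::finite. 0::nat) = {}" unfolding Sset_def by auto
  have I: "IS (\<lambda>_::'n::finite. 0::nat) \<alpha> = (if \<alpha> = (\<lambda>_. 0) then {\<lambda>_. undefined} else {})"
    unfolding IS_def S PiE_empty_domain by (auto simp: fun_eq_iff)
  show ?thesis unfolding mono_coeff_alt I S by simp
qed

lemma mono_coeff_ek: "mono_coeff u (ek k) \<alpha> = u k \<alpha>"
proof -
  have S: "Sset (ek k) = {(k,0)}" unfolding Sset_def ek_def by (auto split: if_splits)
  have I: "IS (ek k) \<alpha> = {(\<lambda>p. if p = (k,0) then \<alpha> else undefined)}"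
    unfolding IS_def S by (auto simp: PiE_def extensional_def fun_eq_iff)
  show ?thesis unfolding mono_coeff_alt I S by simp
qed



lemma IS_D:
  assumes "\<delta> \<in> IS \<gamma> \<alpha>"
  shows "\<And>p i. p \<in> Sset \<gamma> \<Longrightarrow> \<delta> p i \<le> \<alpha> i"
    and "\<And>i. (\<Sum>p\<in>Sset \<gamma>. \<delta> p i) = \<alpha> i"
    and "\<delta> \<in> PiE (Sset \<gamma>) (\<lambda>_. {\<beta>. \<forall>i. \<beta> i \<le> \<alpha> i})"
  using assms unfolding IS_def by (auto simp: fun_eq_iff)

lemma IS_deg:
  assumes "\<delta> \<in> IS \<gamma> \<alpha>"
  shows "deg \<alpha> = (\<Sum>p\<in>Sset \<gamma>. deg (\<delta> p))"
proof -
  have "deg \<alpha> = (\<Sum>i\<in>UNIV. \<Sum>p\<in>Sset \<gamma>. \<delta> p i)" unfolding deg_def using IS_D(2)[OF assms] by simp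
  also have "\<dots> = (\<Sum>p\<in>Sset \<gamma>. deg (\<delta> p))" unfolding deg_def by (rule sum.swap)
  finally show ?thesis .
qed

lemma mono_coeff_local:
  assumes "\<And>k \<beta>. (\<forall>i. \<beta> i \<le> \<alpha> i) \<Longrightarrow> u k \<beta> = u' k \<beta>"
  shows "mono_coeff u \<gamma> \<alpha> = mono_coeff u' \<gamma> \<alpha>"
  unfolding mono_coeff_alt
proof (rule sum.cong[OF refl], rule prod.cong[OF refl])
  fix \<delta> p assume "\<delta> \<in> IS \<gamma> \<alpha>" "p \<in> Sset \<gamma>"
  then show "u (fst p) (\<delta> p) = u' (fst p) (\<delta> p)" using assms IS_D(1) by blast
qed

lemma mono_coeff_dep2:
  assumes z: "\<forall>k. u k (\<lambda>_. 0) = 0" "\<forall>k. u' k (\<lambda>_. 0) = 0"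
    and ag: "\<forall>k \<beta>. deg \<beta> < deg \<alpha> \<longrightarrow> u k \<beta> = u' k \<beta>"
    and g2: "deg \<gamma> \<ge> 2"
  shows "mono_coeff u \<gamma> \<alpha> = mono_coeff u' \<gamma> \<alpha>"
  unfolding mono_coeff_alt
proof (rule sum.cong[OF refl])
  fix \<delta> assume d: "\<delta> \<in> IS \<gamma> \<alpha>"
  show "(\<Prod>p\<in>Sset \<gamma>. u (fst p) (\<delta> p)) = (\<Prod>p\<in>Sset \<gamma>. u' (fst p) (\<delta> p))"
  proof (cases "\<exists>p\<in>Sset \<gamma>. \<delta> p = (\<lambda>_. 0)")
    case True
    then obtain p where "p \<in> Sset \<gamma>" "\<delta> p = (\<lambda>_. 0)" by blast
    then have h: "(\<Prod>p\<in>Sset \<gamma>. u (fst p) (\<delta> p)) = 0" "(\<Prod>p\<in>Sset \<gamma>. u' (fst p) (\<delta> p)) = 0"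
      using z by (auto intro!: prod_zero bexI[where x=p])
    show ?thesis by (simp only: h)
  next
    case False
    then have nz: "\<forall>p\<in>Sset \<gamma>. deg (\<delta> p) \<ge> 1" using deg_zero_iff
      by (metis less_one not_le)
    show ?thesis
    proof (rule prod.cong[OF refl])
      fix p assume p: "p \<in> Sset \<gamma>"
      have "card (Sset \<gamma>) \<ge> 2" using g2 card_Sset by metis
      have "Sset \<gamma> - {p} \<noteq> {}"
      proof
        assume "Sset \<gamma> - {p} = {}"
        then have "Sset \<gamma> \<subseteq> {p}" by blast
        then have "card (Sset \<gamma>) \<le> 1" using card_mono[of "{p}" "Sset \<gamma>"] by simp
        with \<open>card (Sset \<gamma>) \<ge> 2\<close> show False by simp
      qed
      then obtain p' where p': "p' \<in> Sset \<gamma>" "p' \<noteq> p" by blast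
      have "deg (\<delta> p) + deg (\<delta> p') = (\<Sum>x\<in>{p,p'}. deg (\<delta> x))" using p' by simp
      also have "\<dots> \<le> (\<Sum>x\<in>Sset \<gamma>. deg (\<delta> x))" by (rule sum_mono2) (use p p' in auto)
      also have "\<dots> = deg \<alpha>" using IS_deg[OF d] by simp
      finally have "deg (\<delta> p) < deg \<alpha>" using nz p' by force
      then show "u (fst p) (\<delta> p) = u' (fst p) (\<delta> p)" using ag by blast
    qed
  qed
qed



definition monoR :: "(('m::finite \<Rightarrow> nat) \<Rightarrow> real) \<Rightarrow> ('n::finite \<Rightarrow> nat) \<Rightarrow> ('m \<Rightarrow> nat) \<Rightarrow> real" where
  "monoR P \<gamma> \<alpha> = (\<Sum>\<delta>\<in>IS \<gamma> \<alpha>. \<Prod>p\<in>Sset \<gamma>. P (\<delta> p))"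

lemma monoR_nonneg: "(\<And>\<beta>. P \<beta> \<ge> 0) \<Longrightarrow> monoR P \<gamma> \<alpha> \<ge> 0"
  unfolding monoR_def by (intro sum_nonneg prod_nonneg) auto

lemma norm_mono_coeff_le:
  assumes "\<And>k \<beta>. cmod (u k \<beta>) \<le> P \<beta>"
  shows "cmod (mono_coeff u \<gamma> \<alpha>) \<le> monoR P \<gamma> \<alpha>"
proof -
  have "cmod (mono_coeff u \<gamma> \<alpha>) \<le> (\<Sum>\<delta>\<in>IS \<gamma> \<alpha>. cmod (\<Prod>p\<in>Sset \<gamma>. u (fst p) (\<delta> p)))"
    unfolding mono_coeff_alt by (rule norm_sum)
  also have "\<dots> \<le> monoR P \<gamma> \<alpha>" unfolding monoR_def
  proof (rule sum_mono)
    fix \<delta> show "cmod (\<Prod>p\<in>Sset \<gamma>. u (fst p) (\<delta> p)) \<le> (\<Prod>p\<in>Sset \<gamma>. P (\<delta> p))"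
      unfolding prod_norm[symmetric] by (rule prod_mono) (use assms in auto)
  qed
  finally show ?thesis .
qed

lemma monoR_gen_bound:
  fixes P :: "('m::finite \<Rightarrow> nat) \<Rightarrow> real" and x :: real and \<gamma> :: "'n::finite \<Rightarrow> nat"
  assumes x: "x \<ge> 0" and P: "\<And>\<beta>. P \<beta> \<ge> 0"
  shows "(\<Sum>\<alpha>\<in>{\<alpha>. deg \<alpha> \<le> N}. x ^ deg \<alpha> * monoR P \<gamma> \<alpha>)
          \<le> (\<Sum>\<beta>\<in>{\<beta>. deg \<beta> \<le> N}. P \<beta> * x ^ deg \<beta>) ^ deg \<gamma>"
proof -
  let ?A = "{\<alpha>::'m \<Rightarrow> nat. deg \<alpha> \<le> N}"
  let ?S = "Sset \<gamma>"
  let ?F = "\<lambda>\<delta>. \<Prod>p\<in>?S. P (\<delta> p) * x ^ deg (\<delta> p)"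
  have "(\<Sum>\<alpha>\<in>?A. x ^ deg \<alpha> * monoR P \<gamma> \<alpha>) = (\<Sum>\<alpha>\<in>?A. \<Sum>\<delta>\<in>IS \<gamma> \<alpha>. ?F \<delta>)"
  proof (rule sum.cong[OF refl])
    fix \<alpha> assume "\<alpha> \<in> ?A"
    show "x ^ deg \<alpha> * monoR P \<gamma> \<alpha> = (\<Sum>\<delta>\<in>IS \<gamma> \<alpha>. ?F \<delta>)"
      unfolding monoR_def sum_distrib_left
    proof (rule sum.cong[OF refl])
      fix \<delta> assume d: "\<delta> \<in> IS \<gamma> \<alpha>"
      have "x ^ deg \<alpha> = (\<Prod>p\<in>?S. x ^ deg (\<delta> p))" unfolding IS_deg[OF d] by (rule power_sum)
      then show "x ^ deg \<alpha> * (\<Prod>p\<in>?S. P (\<delta> p)) = ?F \<delta>"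
        by (simp add: prod.distrib mult.commute)
    qed
  qed
  also have "\<dots> = (\<Sum>z\<in>Sigma ?A (IS \<gamma>). ?F (snd z))"
    by (subst sum.Sigma) (simp_all add: split_beta)
  also have "\<dots> \<le> (\<Sum>\<delta>\<in>PiE ?S (\<lambda>_. ?A). ?F \<delta>)"
  proof (rule sum_le_included[where f="\<lambda>z. ?F (snd z)" and g="?F" and i = "\<lambda>\<delta>. ((\<lambda>i. \<Sum>p\<in>?S. \<delta> p i), \<delta>)"])
    show "finite (Sigma ?A (IS \<gamma>))" by (rule finite_SigmaI) auto
    show "finite (PiE ?S (\<lambda>_. ?A))" by (rule finite_PiE) auto
    show "\<forall>y\<in>PiE ?S (\<lambda>_. ?A). 0 \<le> ?F y" using P x by (auto intro!: prod_nonneg)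
    show "\<forall>z\<in>Sigma ?A (IS \<gamma>). \<exists>y\<in>PiE ?S (\<lambda>_. ?A). ((\<lambda>i. \<Sum>p\<in>?S. y p i), y) = z \<and> ?F (snd z) \<le> ?F y"
    proof
      fix z assume z: "z \<in> Sigma ?A (IS \<gamma>)"
      then obtain \<alpha> \<delta> where zz: "z = (\<alpha>, \<delta>)" "deg \<alpha> \<le> N" "\<delta> \<in> IS \<gamma> \<alpha>" by auto
      have "\<delta> \<in> PiE ?S (\<lambda>_. ?A)"
      proof -
        have "\<delta> \<in> PiE ?S (\<lambda>_. {\<beta>. \<forall>i. \<beta> i \<le> \<alpha> i})" by (rule IS_D(3)[OF zz(3)])
        moreover have "{\<beta>. \<forall>i. \<beta> i \<le> \<alpha> i} \<subseteq> ?A" proof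
          fix \<beta> :: "'m \<Rightarrow> nat" assume "\<beta> \<in> {\<beta>. \<forall>i. \<beta> i \<le> \<alpha> i}"
          then have "deg \<beta> \<le> deg \<alpha>" by (simp add: deg_le_mono)
          with zz(2) show "\<beta> \<in> ?A" by simp
        qed
        ultimately show ?thesis using PiE_mono[of ?S "\<lambda>_. {\<beta>. \<forall>i. \<beta> i \<le> \<alpha> i}" "\<lambda>_. ?A"] by blast
      qed
      moreover have "(\<lambda>i. \<Sum>p\<in>?S. \<delta> p i) = \<alpha>" by (rule ext) (rule IS_D(2)[OF zz(3)])
      ultimately show "\<exists>y\<in>PiE ?S (\<lambda>_. ?A). ((\<lambda>i. \<Sum>p\<in>?S. y p i), y) = z \<and> ?F (snd z) \<le> ?F y"
        unfolding zz(1) by (intro bexI[of _ \<delta>]) auto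
    qed
  qed
  also have "\<dots> = (\<Prod>p\<in>?S. \<Sum>\<beta>\<in>?A. P \<beta> * x ^ deg \<beta>)"
    by (rule prod_sum_PiE[symmetric]) auto
  also have "\<dots> = (\<Sum>\<beta>\<in>?A. P \<beta> * x ^ deg \<beta>) ^ deg \<gamma>"
    by (simp add: card_Sset)
  finally show ?thesis .
qed



abbreviation z0 :: "'i \<Rightarrow> nat" where "z0 \<equiv> (\<lambda>_. 0)"

definition excl :: "('m \<Rightarrow> nat) \<Rightarrow> ('n \<Rightarrow> nat) \<Rightarrow> bool" where
  "excl \<beta> \<gamma> \<longleftrightarrow> \<beta> = z0 \<and> (\<gamma> = z0 \<or> \<gamma> \<in> range ek)"

definition restc :: "(('m::finite \<Rightarrow> nat) \<Rightarrow> ('n::finite \<Rightarrow> nat) \<Rightarrow> complex)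
   \<Rightarrow> ('n \<Rightarrow> ('m \<Rightarrow> nat) \<Rightarrow> complex) \<Rightarrow> ('m \<Rightarrow> nat) \<Rightarrow> complex" where
  "restc cf u \<alpha> = (\<Sum>\<beta>\<in>{\<beta>. \<forall>i. \<beta> i \<le> \<alpha> i}. \<Sum>\<gamma>\<in>{\<gamma>. sum \<gamma> UNIV \<le> sum \<alpha> UNIV}.
        if excl \<beta> \<gamma> then 0 else cf \<beta> \<gamma> * mono_coeff u \<gamma> (\<lambda>i. \<alpha> i - \<beta> i))"

lemma finite_G[simp]: "finite {\<gamma>::'n::finite \<Rightarrow> nat. sum \<gamma> UNIV \<le> N}"
  using finite_deg_le[of N] unfolding deg_def .

lemma comp_decomp:
  fixes cf :: "('m::finite \<Rightarrow> nat) \<Rightarrow> ('n::finite \<Rightarrow> nat) \<Rightarrow> complex"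
  assumes a: "\<alpha> \<noteq> z0"
  shows "comp_coeff cf u \<alpha> = restc cf u \<alpha> + (\<Sum>k\<in>UNIV. cf z0 (ek k) * u k \<alpha>)"
proof -
  let ?B = "{\<beta>::'m\<Rightarrow>nat. \<forall>i. \<beta> i \<le> \<alpha> i}" and ?G = "{\<gamma>::'n\<Rightarrow>nat. sum \<gamma> UNIV \<le> sum \<alpha> UNIV}"
  let ?T = "\<lambda>\<beta> \<gamma>. cf \<beta> \<gamma> * mono_coeff u \<gamma> (\<lambda>i. \<alpha> i - \<beta> i)"
  have "comp_coeff cf u \<alpha> = (\<Sum>\<beta>\<in>?B. \<Sum>\<gamma>\<in>?G. (if excl \<beta> \<gamma> then 0 else ?T \<beta> \<gamma>) + (if excl \<beta> \<gamma> then ?T \<beta> \<gamma> else 0))"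
    unfolding comp_coeff_def by (intro sum.cong refl) auto
  also have "\<dots> = restc cf u \<alpha> + (\<Sum>\<beta>\<in>?B. \<Sum>\<gamma>\<in>?G. if excl \<beta> \<gamma> then ?T \<beta> \<gamma> else 0)"
    unfolding restc_def by (simp add: sum.distrib)
  also have "(\<Sum>\<beta>\<in>?B. \<Sum>\<gamma>\<in>?G. if excl \<beta> \<gamma> then ?T \<beta> \<gamma> else 0)
      = (\<Sum>\<beta>\<in>?B. if \<beta> = z0 then (\<Sum>\<gamma>\<in>?G. if \<gamma> \<in> range ek then ?T z0 \<gamma> else 0) else 0)"
  proof (rule sum.cong[OF refl])
    fix \<beta> assume "\<beta> \<in> ?B"
    show "(\<Sum>\<gamma>\<in>?G. if excl \<beta> \<gamma> then ?T \<beta> \<gamma> else 0) =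
      (if \<beta> = z0 then (\<Sum>\<gamma>\<in>?G. if \<gamma> \<in> range ek then ?T z0 \<gamma> else 0) else 0)"
    proof (cases "\<beta> = z0")
      case True
      have h: "?T z0 z0 = 0" using a by (simp add: mono_coeff_zero)
      show ?thesis unfolding True excl_def using h by (auto intro!: sum.cong)
    qed (auto simp: excl_def)
  qed
  also have "\<dots> = (\<Sum>\<gamma>\<in>?G. if \<gamma> \<in> range ek then ?T z0 \<gamma> else 0)"
    by (subst sum.delta) auto
  also have "\<dots> = (\<Sum>\<gamma>\<in>?G \<inter> range ek. ?T z0 \<gamma>)"
    by (subst sum.inter_restrict) auto
  also have "?G \<inter> range ek = range ek"
  proof -
    have "deg \<alpha> \<ge> 1" using a deg_zero_iff by (metis less_one not_le)
    have "ek k \<in> ?G" for k :: 'n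
    proof -
      have "deg (ek k) \<le> deg \<alpha>" using \<open>deg \<alpha> \<ge> 1\<close> by simp
      then show ?thesis unfolding deg_def by simp
    qed
    then show ?thesis by auto
  qed
  also have "(\<Sum>\<gamma>\<in>range ek. ?T z0 \<gamma>) = (\<Sum>k\<in>UNIV. ?T z0 (ek k))"
    by (rule sum.reindex[OF ek_inj, unfolded comp_def])
  also have "\<dots> = (\<Sum>k\<in>UNIV. cf z0 (ek k) * u k \<alpha>)"
    by (simp add: mono_coeff_ek)
  finally show ?thesis .
qed

lemma deg_diff: "(\<forall>i. \<beta> i \<le> \<alpha> i) \<Longrightarrow> deg (\<lambda>i. \<alpha> i - \<beta> i) + deg \<beta> = deg \<alpha>"
  unfolding deg_def by (simp add: sum.distrib[symmetric])

lemma deg_ge2: "\<gamma> \<noteq> z0 \<Longrightarrow> \<gamma> \<notin> range ek \<Longrightarrow> deg \<gamma> \<ge> 2"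
  using deg_zero_iff deg_one_range by (metis One_nat_def Suc_1 less_2_cases not_le)

lemma restc_dep:
  assumes z: "\<forall>k. u k z0 = 0" "\<forall>k. u' k z0 = 0"
    and ag: "\<forall>k \<beta>. deg \<beta> < deg \<alpha> \<longrightarrow> u k \<beta> = u' k \<beta>"
  shows "restc cf u \<alpha> = restc cf u' \<alpha>"
  unfolding restc_def
proof (intro sum.cong refl)
  fix \<beta> \<gamma> assume b: "\<beta> \<in> {\<beta>. \<forall>i. \<beta> i \<le> \<alpha> i}"
  show "(if excl \<beta> \<gamma> then 0 else cf \<beta> \<gamma> * mono_coeff u \<gamma> (\<lambda>i. \<alpha> i - \<beta> i)) =
        (if excl \<beta> \<gamma> then 0 else cf \<beta> \<gamma> * mono_coeff u' \<gamma> (\<lambda>i. \<alpha> i - \<beta> i))"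
  proof (cases "excl \<beta> \<gamma>")
    case False
    show ?thesis
    proof (cases "\<beta> = z0")
      case True
      with False have "\<gamma> \<noteq> z0" "\<gamma> \<notin> range ek" unfolding excl_def by auto
      then have "deg \<gamma> \<ge> 2" by (rule deg_ge2)
      then have "mono_coeff u \<gamma> \<alpha> = mono_coeff u' \<gamma> \<alpha>"
        using z ag by (intro mono_coeff_dep2) auto
      with True show ?thesis by simp
    next
      case nz: False
      have "deg \<beta> \<ge> 1" using nz deg_zero_iff by (metis less_one not_le)
      have "mono_coeff u \<gamma> (\<lambda>i. \<alpha> i - \<beta> i) = mono_coeff u' \<gamma> (\<lambda>i. \<alpha> i - \<beta> i)"
      proof (rule mono_coeff_local)
        fix k \<beta>' assume "\<forall>i. \<beta>' i \<le> \<alpha> i - \<beta> i"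
        then have "deg \<beta>' \<le> deg (\<lambda>i. \<alpha> i - \<beta> i)" by (rule deg_le_mono)
        moreover have "deg (\<lambda>i. \<alpha> i - \<beta> i) + deg \<beta> = deg \<alpha>" using b deg_diff by auto
        ultimately have "deg \<beta>' < deg \<alpha>" using \<open>deg \<beta> \<ge> 1\<close> by linarith
        then show "u k \<beta>' = u' k \<beta>'" using ag by blast
      qed
      then show ?thesis by simp
    qed
  qed simp
qed

lemma comp_coeff_zero: "comp_coeff cf u z0 = cf z0 z0"
proof -
  have B: "{\<beta>::'a::finite \<Rightarrow> nat. \<forall>i. \<beta> i \<le> 0} = {z0}" by auto
  have G: "{\<gamma>::'b::finite \<Rightarrow> nat. sum \<gamma> UNIV \<le> sum (z0::'a \<Rightarrow> nat) UNIV} = {z0}"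
    using deg_zero_iff unfolding deg_def by auto
  show ?thesis unfolding comp_coeff_def B G by (simp add: mono_coeff_zero)
qed



lemma solve_unique:
  fixes D :: "'n::finite \<Rightarrow> 'n \<Rightarrow> complex"
  assumes ne: "\<not> is_eigenvalue D \<mu>"
  shows "\<exists>!v. \<forall>j. \<mu> * v j - (\<Sum>k\<in>UNIV. D j k * v k) = R j"
proof -
  define f :: "complex^'n \<Rightarrow> complex^'n" where "f x = (\<chi> j. \<mu> * x$j - (\<Sum>k\<in>UNIV. D j k * x$k))" for x
  have lin: "linear f"
  proof (rule linearI)
    fix x y show "f (x + y) = f x + f y"
      unfolding f_def by (simp add: vec_eq_iff algebra_simps sum.distrib)
  next
    fix c :: real and x show "f (c *\<^sub>R x) = c *\<^sub>R f x"
      unfolding f_def by (simp add: vec_eq_iff scaleR_right_diff_distrib scaleR_sum_right)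
  qed
  have ker: "x = 0" if "f x = 0" for x
  proof (rule ccontr)
    assume "x \<noteq> 0"
    then have "(\<lambda>k. x$k) \<noteq> (\<lambda>_. 0)" by (simp add: vec_eq_iff fun_eq_iff)
    moreover have "\<forall>j. (\<Sum>k\<in>UNIV. D j k * x$k) = \<mu> * x$j"
      using that unfolding f_def by (simp add: vec_eq_iff)
    ultimately have "is_eigenvalue D \<mu>" unfolding is_eigenvalue_def by blast
    with ne show False by simp
  qed
  have inj: "inj f"
  proof (rule injI)
    fix x y assume "f x = f y"
    then have "f (x - y) = 0" using linear_diff[OF lin] by simp
    then have "x - y = 0" by (rule ker)
    then show "x = y" by simp
  qed
  have surj: "surj f" by (rule linear_inj_imp_surj[OF lin inj])
  then obtain x where x: "f x = (\<chi> j. R j)" by (metis surjD)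
  show ?thesis
  proof (rule ex1I[of _ "\<lambda>k. x$k"])
    show "\<forall>j. \<mu> * x$j - (\<Sum>k\<in>UNIV. D j k * x$k) = R j"
      using x unfolding f_def by (simp add: vec_eq_iff)
  next
    fix v assume v: "\<forall>j. \<mu> * v j - (\<Sum>k\<in>UNIV. D j k * v k) = R j"
    have "f (\<chi> k. v k) = (\<chi> j. R j)" using v unfolding f_def by (simp add: vec_eq_iff)
    with x have "(\<chi> k. v k) = x" using inj by (metis injD)
    then show "v = (\<lambda>k. x$k)" by (auto simp: vec_eq_iff)
  qed
qed

lemma continuous_on_vec_nth_comp[continuous_intros]:
  fixes f :: "'a::topological_space \<Rightarrow> 'b::real_normed_vector^'n::finite"
  shows "continuous_on S f \<Longrightarrow> continuous_on S (\<lambda>x. f x $ j)"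
  by (rule bounded_linear.continuous_on[OF bounded_linear_vec_nth[of j]])

definition gL :: "('n::finite \<Rightarrow> 'n \<Rightarrow> complex) \<Rightarrow> complex \<Rightarrow> ('n \<Rightarrow> complex) \<Rightarrow> real" where
  "gL D w v = (\<Sum>j\<in>UNIV. cmod (w * v j - (\<Sum>k\<in>UNIV. D j k * v k)))"

lemma gL_scale: "gL D w (\<lambda>j. v j / of_real s) = gL D w v / s" if "s > 0"
proof -
  have "w * (v j / of_real s) - (\<Sum>k\<in>UNIV. D j k * (v k / of_real s))
        = (w * v j - (\<Sum>k\<in>UNIV. D j k * v k)) / of_real s" for j
    by (simp add: diff_divide_distrib sum_divide_distrib)
  then show ?thesis unfolding gL_def using that
    by (simp add: norm_divide sum_divide_distrib)
qed

lemma gL_large: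
  assumes "cmod w \<ge> (\<Sum>j\<in>UNIV. \<Sum>k\<in>UNIV. cmod (D j k)) + 1"
  shows "gL D w v \<ge> (\<Sum>j\<in>UNIV. cmod (v j))"
proof -
  let ?s = "\<Sum>j\<in>UNIV. cmod (v j)"
  let ?Ds = "\<Sum>j\<in>UNIV. \<Sum>k\<in>UNIV. cmod (D j k)"
  have "gL D w v \<ge> (\<Sum>j\<in>UNIV. cmod w * cmod (v j) - (\<Sum>k\<in>UNIV. cmod (D j k) * ?s))"
    unfolding gL_def
  proof (rule sum_mono)
    fix j
    have "cmod (\<Sum>k\<in>UNIV. D j k * v k) \<le> (\<Sum>k\<in>UNIV. cmod (D j k) * cmod (v k))"
      by (rule order.trans[OF norm_sum]) (simp add: norm_mult)
    also have "\<dots> \<le> (\<Sum>k\<in>UNIV. cmod (D j k) * ?s)"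
      by (intro sum_mono mult_left_mono member_le_sum) auto
    finally have "cmod (\<Sum>k\<in>UNIV. D j k * v k) \<le> (\<Sum>k\<in>UNIV. cmod (D j k) * ?s)" .
    moreover have "cmod (w * v j) - cmod (\<Sum>k\<in>UNIV. D j k * v k) \<le> cmod (w * v j - (\<Sum>k\<in>UNIV. D j k * v k))"
      by (rule norm_triangle_ineq2)
    ultimately show "cmod w * cmod (v j) - (\<Sum>k\<in>UNIV. cmod (D j k) * ?s) \<le> cmod (w * v j - (\<Sum>k\<in>UNIV. D j k * v k))"
      by (simp add: norm_mult)
  qed
  also have "(\<Sum>j\<in>UNIV. cmod w * cmod (v j) - (\<Sum>k\<in>UNIV. cmod (D j k) * ?s)) = cmod w * ?s - ?Ds * ?s"
    by (simp only: sum_subtractf sum_distrib_left[symmetric] sum_distrib_right[symmetric])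
  also have "\<dots> = (cmod w - ?Ds) * ?s" by (simp add: algebra_simps)
  finally have "gL D w v \<ge> (cmod w - ?Ds) * ?s" .
  moreover have "(cmod w - ?Ds) * ?s \<ge> 1 * ?s" using assms
    by (intro mult_right_mono) (auto intro: sum_nonneg)
  ultimately show ?thesis by simp
qed

lemma gL_nonneg: "gL D w v \<ge> 0" unfolding gL_def by (simp add: sum_nonneg)

lemma unif_lower_bound:
  fixes D :: "'n::finite \<Rightarrow> 'n \<Rightarrow> complex" and Q :: "complex set"
  assumes nc: "\<And>\<mu>. is_eigenvalue D \<mu> \<Longrightarrow> \<mu> \<notin> closure Q"
  shows "\<exists>\<epsilon>>0. \<forall>w\<in>Q. \<forall>v. \<epsilon> * (\<Sum>j\<in>UNIV. cmod (v j)) \<le> gL D w v"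
proof -
  define R where "R = (\<Sum>j\<in>UNIV. \<Sum>k\<in>UNIV. cmod (D j k)) + 1"
  define Sph where "Sph = {x::complex^'n. (\<Sum>j\<in>UNIV. cmod (x$j)) = 1}"
  define K where "K = (closure Q \<inter> cball 0 R) \<times> Sph"
  define G where "G = (\<lambda>p::complex \<times> (complex^'n). gL D (fst p) (\<lambda>j. snd p $ j))"
  have cont: "continuous_on K G"
    unfolding G_def gL_def by (intro continuous_intros)
  have "closed Sph"
  proof -
    have "continuous_on UNIV (\<lambda>x::complex^'n. \<Sum>j\<in>UNIV. cmod (x$j))" by (intro continuous_intros)
    then show ?thesis unfolding Sph_def by (rule closed_Collect_eq) (rule continuous_on_const)
  qed
  moreover have "bounded Sph"
  proof -
    have "Sph \<subseteq> cball 0 1"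
    proof
      fix x assume "x \<in> Sph"
      have "norm x \<le> (\<Sum>j\<in>UNIV. cmod (x$j))" unfolding norm_vec_def by (rule L2_set_le_sum) auto
      with \<open>x \<in> Sph\<close> show "x \<in> cball 0 1" unfolding Sph_def by simp
    qed
    then show ?thesis using bounded_cball bounded_subset by blast
  qed
  ultimately have "compact Sph" by (simp add: compact_eq_bounded_closed)
  moreover have "compact (closure Q \<inter> cball 0 R)"
    by (intro closed_Int_compact) auto
  ultimately have compK: "compact K" unfolding K_def by (rule compact_Times[rotated])
  have pos: "G p > 0" if "p \<in> K" for p
  proof (rule ccontr)
    assume "\<not> G p > 0"
    moreover have "G p \<ge> 0" unfolding G_def by (rule gL_nonneg)
    ultimately have G0: "G p = 0" by linarith
    obtain w x where p: "p = (w, x)" by (cases p)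
    have "\<forall>j\<in>UNIV. cmod (w * x$j - (\<Sum>k\<in>UNIV. D j k * x$k)) = 0"
      using G0 unfolding G_def gL_def p by (subst sum_nonneg_eq_0_iff[symmetric]) auto
    then have ev: "\<forall>j. (\<Sum>k\<in>UNIV. D j k * x$k) = w * x$j" by auto
    have "(\<lambda>j. x$j) \<noteq> (\<lambda>_. 0)"
    proof
      assume "(\<lambda>j. x$j) = (\<lambda>_. 0)"
      then have "(\<Sum>j\<in>UNIV. cmod (x$j)) = 0" by (simp add: fun_eq_iff)
      with that show False unfolding K_def Sph_def p by auto
    qed
    with ev have "is_eigenvalue D w" unfolding is_eigenvalue_def by blast
    with nc that show False unfolding K_def p by auto
  qed
  obtain \<epsilon>0 where e0: "\<epsilon>0 > 0" "\<forall>p\<in>K. \<epsilon>0 \<le> G p"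
  proof (cases "K = {}")
    case True then show ?thesis using that[of 1] by auto
  next
    case False
    then obtain p0 where "p0 \<in> K" "\<forall>p\<in>K. G p0 \<le> G p"
      using continuous_attains_inf[OF compK False cont] by blast
    then show ?thesis using that[of "G p0"] pos by auto
  qed
  show ?thesis
  proof (intro exI[of _ "min \<epsilon>0 1"] conjI ballI allI)
    show "min \<epsilon>0 1 > 0" using e0 by simp
    fix w and v :: "'n \<Rightarrow> complex" assume w: "w \<in> Q"
    let ?s = "\<Sum>j\<in>UNIV. cmod (v j)"
    show "min \<epsilon>0 1 * ?s \<le> gL D w v"
    proof (cases "?s = 0")
      case True then show ?thesis using gL_nonneg[of D w v] by simp
    next
      case False
      then have s: "?s > 0" by (simp add: order_le_neq_trans sum_nonneg)
      show ?thesis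
      proof (cases "cmod w \<le> R")
        case True
        let ?x = "\<chi> j. v j / of_real ?s"
        have "(\<Sum>j\<in>UNIV. cmod (?x$j)) = ?s / ?s" using s
          by (simp add: norm_divide sum_divide_distrib[symmetric] del: of_real_sum)
        then have "?x \<in> Sph" unfolding Sph_def using s by simp
        moreover have "w \<in> closure Q \<inter> cball 0 R" using w True closure_subset by auto
        ultimately have "(w, ?x) \<in> K" unfolding K_def by simp
        then have "\<epsilon>0 \<le> G (w, ?x)" using e0 by blast
        moreover have "G (w, ?x) = gL D w (\<lambda>j. v j / of_real ?s)" unfolding G_def
          by (simp add: vec_lambda_inverse del: of_real_sum)
        ultimately have "\<epsilon>0 \<le> gL D w (\<lambda>j. v j / of_real ?s)" by simp
        also have "\<dots> = gL D w v / ?s" by (rule gL_scale[OF s])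
        finally have "\<epsilon>0 * ?s \<le> gL D w v" using s by (simp add: field_simps)
        moreover have "min \<epsilon>0 1 * ?s \<le> \<epsilon>0 * ?s" using s by (intro mult_right_mono) auto
        ultimately show ?thesis by linarith
      next
        case False
        then have "gL D w v \<ge> ?s" unfolding R_def by (intro gL_large) auto
        moreover have "min \<epsilon>0 1 * ?s \<le> 1 * ?s" using s by (intro mult_right_mono) auto
        ultimately show ?thesis by linarith
      qed
    qed
  qed
qed



definition Dm :: "('n \<Rightarrow> ('m \<Rightarrow> nat) \<Rightarrow> ('n \<Rightarrow> nat) \<Rightarrow> complex) \<Rightarrow> 'n \<Rightarrow> 'n \<Rightarrow> complex" where
  "Dm c j k = c j z0 (ek k)"

lemma deg_z0[simp]: "deg (z0::'i::finite\<Rightarrow>nat) = 0"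
  unfolding deg_def by simp

lemma tpow_zero[simp]: "tpow q z0 = 1"
  unfolding tpow_def by simp

lemma fs_iff:
  fixes q :: "'m::finite \<Rightarrow> complex" and c :: "'n::finite \<Rightarrow> ('m\<Rightarrow>nat) \<Rightarrow> ('n\<Rightarrow>nat) \<Rightarrow> complex"
  assumes c00: "\<And>j. c j z0 z0 = Y j"
  shows "formal_solution q c Y b \<longleftrightarrow> (\<forall>j. b j z0 = 0) \<and>
     (\<forall>\<alpha> j. \<alpha> \<noteq> z0 \<longrightarrow> tpow q \<alpha> * b j \<alpha> - (\<Sum>k\<in>UNIV. Dm c j k * b k \<alpha>) = restc (c j) b \<alpha>)"
proof -
  have a: "(tpow q \<alpha> * b j \<alpha> = comp_coeff (c j) b \<alpha>) \<longleftrightarrow>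
      (tpow q \<alpha> * b j \<alpha> - (\<Sum>k\<in>UNIV. Dm c j k * b k \<alpha>) = restc (c j) b \<alpha>)" if "\<alpha> \<noteq> z0" for \<alpha> j
    using comp_decomp[OF that, of "c j" b] unfolding Dm_def by (auto simp: algebra_simps)
  have z: "(Y j + tpow q z0 * b j z0 = comp_coeff (c j) b z0) \<longleftrightarrow> b j z0 = 0" for j
    using c00 by (simp add: comp_coeff_zero)
  show ?thesis unfolding formal_solution_def
  proof safe
    fix \<alpha> :: "'m \<Rightarrow> nat" and j assume h: "\<forall>j \<alpha>. (if \<alpha> = z0 then Y j else 0) + tpow q \<alpha> * b j \<alpha> = comp_coeff (c j) b \<alpha>" and an: "\<alpha> \<noteq> z0"
    have "(if \<alpha> = z0 then Y j else 0) + tpow q \<alpha> * b j \<alpha> = comp_coeff (c j) b \<alpha>" using h by blast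
    then have "tpow q \<alpha> * b j \<alpha> = comp_coeff (c j) b \<alpha>" using an by simp
    then show "tpow q \<alpha> * b j \<alpha> - (\<Sum>k\<in>UNIV. Dm c j k * b k \<alpha>) = restc (c j) b \<alpha>"
      using a[OF an] by simp
  next
    fix \<alpha> :: "'m \<Rightarrow> nat" and j assume h: "\<forall>j. b j z0 = 0"
      "\<forall>\<alpha> j. \<alpha> \<noteq> z0 \<longrightarrow> tpow q \<alpha> * b j \<alpha> - (\<Sum>k\<in>UNIV. Dm c j k * b k \<alpha>) = restc (c j) b \<alpha>"
    show "(if \<alpha> = z0 then Y j else 0) + tpow q \<alpha> * b j \<alpha> = comp_coeff (c j) b \<alpha>"
    proof (cases "\<alpha> = z0")
      case True then show ?thesis using z h by simp
    next
      case False then show ?thesis using a h by simp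
    qed
  qed
qed

lemma ex1_eq: "\<exists>!x. P x \<Longrightarrow> P a \<Longrightarrow> P b \<Longrightarrow> a = b" by auto

primrec solN :: "('m::finite \<Rightarrow> complex) \<Rightarrow> ('n::finite \<Rightarrow> ('m\<Rightarrow>nat) \<Rightarrow> ('n\<Rightarrow>nat) \<Rightarrow> complex)
   \<Rightarrow> nat \<Rightarrow> 'n \<Rightarrow> ('m \<Rightarrow> nat) \<Rightarrow> complex" where
  "solN q c 0 = (\<lambda>j \<alpha>. 0)"
| "solN q c (Suc N) = (\<lambda>j \<alpha>. if deg \<alpha> = Suc N then
      (THE v. \<forall>j. tpow q \<alpha> * v j - (\<Sum>k\<in>UNIV. Dm c j k * v k) = restc (c j) (solN q c N) \<alpha>) j
      else solN q c N j \<alpha>)"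

lemma solN_high: "deg \<alpha> > N \<Longrightarrow> solN q c N j \<alpha> = 0"
  by (induction N) auto

lemma solN_stable: "deg \<alpha> \<le> N \<Longrightarrow> solN q c N j \<alpha> = solN q c (deg \<alpha>) j \<alpha>"
proof (induction N)
  case 0 then show ?case by simp
next
  case (Suc N)
  show ?case
  proof (cases "deg \<alpha> = Suc N")
    case True then show ?thesis by simp
  next
    case False
    then have "deg \<alpha> \<le> N" using Suc.prems by simp
    then show ?thesis using Suc.IH False by simp
  qed
qed

lemma formal_eu:
  fixes q :: "'m::finite \<Rightarrow> complex" and c :: "'n::finite \<Rightarrow> ('m\<Rightarrow>nat) \<Rightarrow> ('n\<Rightarrow>nat) \<Rightarrow> complex"
  assumes ne: "\<And>\<alpha>. \<alpha> \<noteq> z0 \<Longrightarrow> \<not> is_eigenvalue (Dm c) (tpow q \<alpha>)"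
    and c00: "\<And>j. c j z0 z0 = Y j"
  shows "\<exists>!b. formal_solution q c Y b"
proof -
  define b where "b = (\<lambda>j \<alpha>. solN q c (deg \<alpha>) j \<alpha>)"
  have b0: "\<forall>j. b j z0 = 0" unfolding b_def using deg_zero_iff by auto
  have agree: "solN q c N j \<beta> = b j \<beta>" if "deg \<beta> \<le> N" for N j \<beta>
    using solN_stable[OF that, of q c j] unfolding b_def by simp
  have sz: "\<forall>k. solN q c N k z0 = 0" for N
    using agree[of z0 N] b0 deg_zero_iff by auto
  have eq: "tpow q \<alpha> * b j \<alpha> - (\<Sum>k\<in>UNIV. Dm c j k * b k \<alpha>) = restc (c j) b \<alpha>"
    if a: "\<alpha> \<noteq> z0" for \<alpha> j
  proof -
    obtain N where N: "deg \<alpha> = Suc N" using a deg_zero_iff by (metis not0_implies_Suc)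
    have ag: "\<forall>k \<beta>. deg \<beta> < deg \<alpha> \<longrightarrow> solN q c N k \<beta> = b k \<beta>"
      using agree N by simp
    have r: "restc (c j') (solN q c N) \<alpha> = restc (c j') b \<alpha>" for j'
      by (rule restc_dep[OF sz b0 ag])
    let ?P = "\<lambda>v. \<forall>j. tpow q \<alpha> * v j - (\<Sum>k\<in>UNIV. Dm c j k * v k) = restc (c j) (solN q c N) \<alpha>"
    have ex: "\<exists>!v. ?P v" by (rule solve_unique[OF ne[OF a]])
    define v0 where "v0 = (THE v. ?P v)"
    have Pv0: "?P v0" unfolding v0_def by (rule theI'[OF ex])
    have bk: "\<And>k. b k \<alpha> = v0 k" unfolding b_def v0_def by (simp add: N)
    have "?P (\<lambda>k. b k \<alpha>)" using Pv0 by (simp add: bk)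
    then show ?thesis using r by simp
  qed
  have "formal_solution q c Y b" unfolding fs_iff[of c Y, OF c00] using b0 eq by auto
  moreover have "b' = b" if "formal_solution q c Y b'" for b'
  proof -
    have b'0: "\<forall>j. b' j z0 = 0" and eq': "\<And>\<alpha> j. \<alpha> \<noteq> z0 \<Longrightarrow>
       tpow q \<alpha> * b' j \<alpha> - (\<Sum>k\<in>UNIV. Dm c j k * b' k \<alpha>) = restc (c j) b' \<alpha>"
      using that unfolding fs_iff[of c Y, OF c00] by auto
    have "\<forall>\<alpha>. deg \<alpha> = n \<longrightarrow> (\<forall>j. b' j \<alpha> = b j \<alpha>)" for n
    proof (induction n rule: less_induct)
      case (less n)
      show ?case
      proof (rule allI, rule impI)
        fix \<alpha> :: "'m \<Rightarrow> nat" assume dn: "deg \<alpha> = n"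
        show "\<forall>j. b' j \<alpha> = b j \<alpha>"
        proof (cases "\<alpha> = z0")
          case True then show ?thesis using b0 b'0 by simp
        next
          case a: False
          have ag: "\<forall>k \<beta>. deg \<beta> < deg \<alpha> \<longrightarrow> b' k \<beta> = b k \<beta>"
          proof (intro allI impI)
            fix k and \<beta> :: "'m \<Rightarrow> nat" assume "deg \<beta> < deg \<alpha>"
            then have "\<forall>j. b' j \<beta> = b j \<beta>" using less.IH[of "deg \<beta>"] dn by simp
            then show "b' k \<beta> = b k \<beta>" by simp
          qed
          have r: "restc (c j) b' \<alpha> = restc (c j) b \<alpha>" for j
            by (rule restc_dep[OF b'0 b0 ag])
          let ?P = "\<lambda>v. \<forall>j. tpow q \<alpha> * v j - (\<Sum>k\<in>UNIV. Dm c j k * v k) = restc (c j) b \<alpha>"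
          have ex: "\<exists>!v. ?P v" by (rule solve_unique[OF ne[OF a]])
          have h1: "?P (\<lambda>k. b' k \<alpha>)" using eq'[OF a] r by simp
          have h2: "?P (\<lambda>k. b k \<alpha>)" using eq[OF a] by simp
          have "(\<lambda>k. b' k \<alpha>) = (\<lambda>k. b k \<alpha>)" by (rule ex1_eq[where P="?P", OF ex h1 h2])
          then show ?thesis by (simp add: fun_eq_iff)
        qed
      qed
    qed
    then show ?thesis by (auto simp: fun_eq_iff)
  qed
  ultimately show ?thesis by blast
qed



lemma tpow_zero_base: "tpow (\<lambda>_. 0) \<beta> = (if \<beta> = z0 then 1 else 0)"
proof (cases "\<beta> = z0")
  case True then show ?thesis by simp
next
  case False
  then obtain i where "\<beta> i \<noteq> 0" by auto
  then have "tpow (\<lambda>_. 0) \<beta> = 0" unfolding tpow_def by (intro prod_zero) auto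
  with False show ?thesis by simp
qed

lemma c00_lemma:
  assumes hol: "power_series_at f cf Y r" and fx: "f (\<lambda>_. 0) Y = y0"
  shows "cf z0 z0 = y0"
proof -
  from hol have r: "r > 0" unfolding power_series_at_def by simp
  from hol have A: "\<forall>t y. (\<forall>i. norm (t i) < r) \<and> (\<forall>k. norm (y k - Y k) < r) \<longrightarrow>
        ((\<lambda>(\<beta>,\<gamma>). cf \<beta> \<gamma> * tpow t \<beta> * tpow (\<lambda>k. y k - Y k) \<gamma>) has_sum f t y) UNIV"
    unfolding power_series_at_def by blast
  have hs: "((\<lambda>(\<beta>,\<gamma>). cf \<beta> \<gamma> * tpow (\<lambda>_. 0) \<beta> * tpow (\<lambda>k. Y k - Y k) \<gamma>) has_sum f (\<lambda>_. 0) Y) UNIV"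
    by (rule A[rule_format]) (use r in simp)
  have e: "(\<lambda>k. Y k - Y k) = (\<lambda>_. 0)" by simp
  have h1: "((\<lambda>(\<beta>,\<gamma>). cf \<beta> \<gamma> * tpow (\<lambda>_. 0) \<beta> * tpow (\<lambda>k. Y k - Y k) \<gamma>) has_sum f (\<lambda>_. 0) Y) {(z0,z0)}"
    using hs by (subst has_sum_cong_neutral[where g = "\<lambda>(\<beta>,\<gamma>). cf \<beta> \<gamma> * tpow (\<lambda>_. 0) \<beta> * tpow (\<lambda>k. Y k - Y k) \<gamma>" and T = UNIV])
      (auto simp: tpow_zero_base e split: if_splits)
  have h2: "((\<lambda>(\<beta>,\<gamma>). cf \<beta> \<gamma> * tpow (\<lambda>_. 0) \<beta> * tpow (\<lambda>k. Y k - Y k) \<gamma>) has_sum cf z0 z0) {(z0,z0)}"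
    using has_sum_finite[of "{(z0,z0)}" "\<lambda>(\<beta>,\<gamma>). cf \<beta> \<gamma> * tpow (\<lambda>_. 0) \<beta> * tpow (\<lambda>k. Y k - Y k) \<gamma>"]
    by (simp add: tpow_zero_base e)
  have "f (\<lambda>_. 0) Y = cf z0 z0" by (rule has_sum_unique[OF h1 h2])
  with fx show ?thesis by simp
qed

definition emb :: "'n \<Rightarrow> nat \<Rightarrow> 'n \<Rightarrow> nat" where "emb k d = (\<lambda>l. if l = k then d else 0)"

lemma tpow_single:
  "tpow (\<lambda>l. if l = k then w else 0) \<gamma> = (if \<gamma> = emb k (\<gamma> k) then w ^ (\<gamma> k) else 0)"
proof (cases "\<gamma> = emb k (\<gamma> k)")
  case True
  have "tpow (\<lambda>l. if l = k then w else 0) \<gamma> = (\<Prod>l\<in>UNIV. if l = k then w ^ \<gamma> k else 1)"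
    unfolding tpow_def
  proof (rule prod.cong[OF refl])
    fix l show "(if l = k then w else 0) ^ \<gamma> l = (if l = k then w ^ \<gamma> k else 1)"
      using fun_cong[OF True, of l] by (auto simp: emb_def)
  qed
  also have "\<dots> = w ^ \<gamma> k" by (subst prod.delta) auto
  finally show ?thesis using True by simp
next
  case False
  then obtain l where "\<gamma> l \<noteq> (if l = k then \<gamma> k else 0)" by (auto simp: emb_def fun_eq_iff)
  then have "l \<noteq> k" "\<gamma> l \<noteq> 0" by (auto split: if_splits)
  then have "tpow (\<lambda>l. if l = k then w else 0) \<gamma> = 0" unfolding tpow_def
    by (intro prod_zero bexI[of _ l]) auto
  with False show ?thesis by simp
qed

lemma emb_inj: "inj (emb k)" unfolding emb_def inj_def fun_eq_iff by metis

lemma ps_slice: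
  fixes f :: "('m::finite \<Rightarrow> complex) \<Rightarrow> ('n::finite \<Rightarrow> complex) \<Rightarrow> complex"
  assumes hol: "power_series_at f cf Y r" and w: "cmod w < r"
  shows "((\<lambda>d. cf z0 (emb k d) * w ^ d) has_sum f (\<lambda>_. 0) (Y(k := Y k + w))) UNIV"
proof -
  from hol have r: "r > 0" unfolding power_series_at_def by simp
  from hol have A: "\<forall>t y. (\<forall>i. norm (t i) < r) \<and> (\<forall>k. norm (y k - Y k) < r) \<longrightarrow>
        ((\<lambda>(\<beta>,\<gamma>). cf \<beta> \<gamma> * tpow t \<beta> * tpow (\<lambda>k. y k - Y k) \<gamma>) has_sum f t y) UNIV"
    unfolding power_series_at_def by blast
  let ?y = "Y(k := Y k + w)"
  have e: "(\<lambda>l. ?y l - Y l) = (\<lambda>l. if l = k then w else 0)" by (auto simp: fun_eq_iff)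
  let ?F = "\<lambda>(\<beta>,\<gamma>). cf \<beta> \<gamma> * tpow (\<lambda>_. 0) \<beta> * tpow (\<lambda>l. if l = k then w else 0) \<gamma>"
  have hs: "(?F has_sum f (\<lambda>_. 0) ?y) UNIV"
    using A[rule_format, of "\<lambda>_. 0" ?y] r w e by (simp add: norm_minus_commute)
  have hs2: "(?F has_sum f (\<lambda>_. 0) ?y) (range (\<lambda>d. (z0, emb k d)))"
  proof (subst has_sum_cong_neutral[where g = ?F and T = UNIV])
    show "(?F has_sum f (\<lambda>_. 0) ?y) UNIV" by (rule hs)
    fix x :: "('m \<Rightarrow> nat) \<times> ('n \<Rightarrow> nat)" assume x: "x \<in> UNIV - range (\<lambda>d. (z0, emb k d))"
    obtain \<beta> \<gamma> where xx: "x = (\<beta>, \<gamma>)" by (cases x)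
    show "?F x = 0"
    proof (cases "\<beta> = z0")
      case True
      then have "\<gamma> \<noteq> emb k (\<gamma> k)" using x xx by auto
      then show ?thesis using xx by (simp add: tpow_single)
    next
      case False then show ?thesis using xx by (simp add: tpow_zero_base)
    qed
  qed auto
  have "((?F \<circ> (\<lambda>d. (z0, emb k d))) has_sum f (\<lambda>_. 0) ?y) UNIV"
    using hs2 has_sum_reindex[of "\<lambda>d. (z0, emb k d)" UNIV ?F] emb_inj[of k]
    by (simp add: inj_def)
  moreover have "(?F \<circ> (\<lambda>d. (z0, emb k d))) = (\<lambda>d. cf z0 (emb k d) * w ^ d)"
    by (auto simp: fun_eq_iff tpow_single emb_def)
  ultimately show ?thesis by simp
qed

lemma jac_lemma:
  fixes f :: "('m::finite \<Rightarrow> complex) \<Rightarrow> ('n::finite \<Rightarrow> complex) \<Rightarrow> complex"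
  assumes hol: "power_series_at f cf Y r"
  shows "deriv (\<lambda>z. f (\<lambda>_. 0) (Y(k := z))) (Y k) = cf z0 (ek k)"
proof -
  from hol have r: "r > 0" unfolding power_series_at_def by simp
  define a where "a d = cf z0 (emb k d)" for d
  define G where "G w = (\<Sum>d. a d * w ^ d)" for w :: complex
  have Geq: "f (\<lambda>_. 0) (Y(k := Y k + w)) = G w" if "cmod w < r" for w
    using has_sum_imp_sums[OF ps_slice[OF hol that, of k]] unfolding G_def a_def
    by (simp add: sums_iff)
  have sm: "summable (\<lambda>d. a d * (complex_of_real (r/2)) ^ d)"
    using has_sum_imp_sums[OF ps_slice[OF hol, of "complex_of_real (r/2)" k]] r unfolding a_def
    by (auto simp: sums_iff)
  have dG: "(G has_field_derivative a 1) (at 0)"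
  proof -
    have "(G has_field_derivative (\<Sum>n. diffs a n * 0 ^ n)) (at 0)"
      unfolding G_def by (rule termdiffs_strong[OF sm]) (use r in simp)
    then show ?thesis by (simp add: diffs_def)
  qed
  have "((\<lambda>z. G (z - Y k)) has_field_derivative a 1 * 1) (at (Y k))"
    by (rule DERIV_chain2[where f = G]) (use dG in simp, auto intro!: derivative_eq_intros)
  then have d2: "((\<lambda>z. G (z - Y k)) has_field_derivative a 1) (at (Y k))" by simp
  have "((\<lambda>z. f (\<lambda>_. 0) (Y(k := z))) has_field_derivative a 1) (at (Y k))"
  proof (rule has_field_derivative_transform_within_open[OF d2, of "ball (Y k) r"])
    show "open (ball (Y k) r)" by simp
    show "Y k \<in> ball (Y k) r" using r by simp
    fix z assume "z \<in> ball (Y k) r"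
    then have "cmod (z - Y k) < r" by (simp add: dist_norm norm_minus_commute)
    from Geq[OF this] show "G (z - Y k) = f (\<lambda>_. 0) (Y(k := z))" by simp
  qed
  then have "deriv (\<lambda>z. f (\<lambda>_. 0) (Y(k := z))) (Y k) = a 1" by (rule DERIV_imp_deriv)
  moreover have "emb k 1 = ek k" unfolding emb_def ek_def by simp
  ultimately show ?thesis unfolding a_def by simp
qed

lemma tpow_const: "tpow (\<lambda>_. c) \<beta> = c ^ deg \<beta>"
  unfolding tpow_def deg_def by (simp add: power_sum)

lemma coeff_bound:
  fixes f :: "('m::finite \<Rightarrow> complex) \<Rightarrow> ('n::finite \<Rightarrow> complex) \<Rightarrow> complex"
  assumes hol: "power_series_at f cf Y r"
  shows "\<exists>M\<ge>0. \<forall>\<beta> \<gamma>. cmod (cf \<beta> \<gamma>) * (r/2) ^ (deg \<beta> + deg \<gamma>) \<le> M"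
proof -
  from hol have r: "r > 0" unfolding power_series_at_def by simp
  from hol have A: "\<forall>t y. (\<forall>i. norm (t i) < r) \<and> (\<forall>k. norm (y k - Y k) < r) \<longrightarrow>
        ((\<lambda>(\<beta>,\<gamma>). cf \<beta> \<gamma> * tpow t \<beta> * tpow (\<lambda>k. y k - Y k) \<gamma>) has_sum f t y) UNIV"
    unfolding power_series_at_def by blast
  let ?c = "complex_of_real (r/2)"
  let ?F = "\<lambda>(\<beta>,\<gamma>). cf \<beta> \<gamma> * tpow (\<lambda>_::'m. ?c) \<beta> * tpow (\<lambda>_::'n. ?c) \<gamma>"
  have e: "(\<lambda>l. (Y l + ?c) - Y l) = (\<lambda>_. ?c)" by auto
  have hs: "(?F has_sum f (\<lambda>_. ?c) (\<lambda>l. Y l + ?c)) UNIV"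
    using A[rule_format, of "\<lambda>_. ?c" "\<lambda>l. Y l + ?c"] r e by simp
  then have "?F summable_on UNIV" by (rule has_sum_imp_summable)
  then have sn: "(\<lambda>x. norm (?F x)) summable_on UNIV"
    using summable_on_iff_abs_summable_on_complex by blast
  define M where "M = infsum (\<lambda>x. norm (?F x)) UNIV"
  have "M \<ge> 0" unfolding M_def by (rule infsum_nonneg) auto
  moreover have "cmod (cf \<beta> \<gamma>) * (r/2) ^ (deg \<beta> + deg \<gamma>) \<le> M" for \<beta> \<gamma>
  proof -
    have "sum (\<lambda>x. norm (?F x)) {(\<beta>,\<gamma>)} \<le> M" unfolding M_def
      by (rule finite_sum_le_infsum[OF sn]) auto
    moreover have "norm (?F (\<beta>,\<gamma>)) = cmod (cf \<beta> \<gamma>) * (r/2) ^ (deg \<beta> + deg \<gamma>)"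
      using r by (simp add: tpow_const norm_mult norm_power power_add)
    ultimately show ?thesis by simp
  qed
  ultimately show ?thesis by blast
qed



abbreviation Aset :: "nat \<Rightarrow> ('i::finite \<Rightarrow> nat) set" where "Aset N \<equiv> {\<alpha>. deg \<alpha> \<le> N}"

lemma reindex_bound:
  fixes F :: "('i::finite \<Rightarrow> nat) \<Rightarrow> ('i \<Rightarrow> nat) \<Rightarrow> real"
  assumes F: "\<And>\<beta> \<alpha>. F \<beta> \<alpha> \<ge> 0"
  shows "(\<Sum>\<alpha>\<in>Aset N. \<Sum>\<beta>\<in>{\<beta>. \<forall>i. \<beta> i \<le> \<alpha> i}. F \<beta> (\<lambda>i. \<alpha> i - \<beta> i))
      \<le> (\<Sum>\<beta>\<in>Aset N. \<Sum>\<alpha>'\<in>Aset N. F \<beta> \<alpha>')"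
proof -
  have "(\<Sum>\<alpha>\<in>Aset N. \<Sum>\<beta>\<in>{\<beta>. \<forall>i. \<beta> i \<le> \<alpha> i}. F \<beta> (\<lambda>i. \<alpha> i - \<beta> i))
      = (\<Sum>z\<in>Sigma (Aset N) (\<lambda>\<alpha>. {\<beta>. \<forall>i. \<beta> i \<le> \<alpha> i}). F (snd z) (\<lambda>i. fst z i - snd z i))"
    by (subst sum.Sigma) (simp_all add: split_beta)
  also have "\<dots> \<le> (\<Sum>y\<in>Sigma (Aset N) (\<lambda>_. Aset N). F (fst y) (snd y))"
  proof (rule sum_le_included[where i = "\<lambda>y. ((\<lambda>i. snd y i + fst y i), fst y)"])
    show "finite (Sigma (Aset N) (\<lambda>\<alpha>. {\<beta>. \<forall>i. \<beta> i \<le> \<alpha> i}))" by (rule finite_SigmaI) auto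
    show "finite (Sigma (Aset N) (\<lambda>_. Aset N) :: (('i \<Rightarrow> nat) \<times> ('i \<Rightarrow> nat)) set)"
      by (rule finite_SigmaI) auto
    show "\<forall>y\<in>Sigma (Aset N) (\<lambda>_. Aset N). 0 \<le> F (fst y) (snd y)" using F by auto
    show "\<forall>z\<in>Sigma (Aset N :: ('i \<Rightarrow> nat) set) (\<lambda>\<alpha>. {\<beta>. \<forall>i. \<beta> i \<le> \<alpha> i}). \<exists>y\<in>Sigma (Aset N) (\<lambda>_. Aset N).
        ((\<lambda>i. snd y i + fst y i), fst y) = z \<and> F (snd z) (\<lambda>i. fst z i - snd z i) \<le> F (fst y) (snd y)"
    proof
      fix z :: "('i \<Rightarrow> nat) \<times> ('i \<Rightarrow> nat)" assume z: "z \<in> Sigma (Aset N) (\<lambda>\<alpha>. {\<beta>. \<forall>i. \<beta> i \<le> \<alpha> i})"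
      obtain \<alpha> \<beta> where zz: "z = (\<alpha>, \<beta>)" by (cases z)
      have a: "deg \<alpha> \<le> N" and b: "\<forall>i. \<beta> i \<le> \<alpha> i" using z zz by auto
      have "deg (\<lambda>i. \<alpha> i - \<beta> i) + deg \<beta> = deg \<alpha>" by (rule deg_diff[OF b])
      with a have d1: "deg \<beta> \<le> N" "deg (\<lambda>i. \<alpha> i - \<beta> i) \<le> N" by linarith+
      have "(\<lambda>i. (\<alpha> i - \<beta> i) + \<beta> i) = \<alpha>" using b by (auto simp: fun_eq_iff)
      then show "\<exists>y\<in>Sigma (Aset N) (\<lambda>_. Aset N).
        ((\<lambda>i. snd y i + fst y i), fst y) = z \<and> F (snd z) (\<lambda>i. fst z i - snd z i) \<le> F (fst y) (snd y)"
        using d1 zz by (intro bexI[of _ "(\<beta>, \<lambda>i. \<alpha> i - \<beta> i)"]) auto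
    qed
  qed
  also have "\<dots> = (\<Sum>\<beta>\<in>Aset N. \<Sum>\<alpha>'\<in>Aset N. F \<beta> \<alpha>')"
    by (subst sum.Sigma) (simp_all add: split_beta)
  finally show ?thesis .
qed

lemma half_geom: "(\<Sum>k\<le>N. (1/2::real) ^ k) \<le> 2"
proof -
  have "(\<Sum>k\<le>N. (1/2::real) ^ k) = 2 - (1/2) ^ N" by (induction N) auto
  then show ?thesis by simp
qed

lemma pow_deg_prod: "(x::real) ^ deg \<beta> = (\<Prod>i\<in>UNIV. x ^ \<beta> i)"
  unfolding deg_def by (simp add: power_sum)

lemma half_sum: "(\<Sum>\<beta>\<in>Aset N. (1/2::real) ^ deg (\<beta>::'i::finite \<Rightarrow> nat)) \<le> 2 ^ CARD('i)"
proof -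
  have sub: "Aset N \<subseteq> PiE (UNIV::'i set) (\<lambda>_. {..N})"
  proof
    fix \<beta> :: "'i \<Rightarrow> nat" assume "\<beta> \<in> Aset N"
    then have "\<beta> i \<le> N" for i
      using member_le_sum[of i UNIV \<beta>] unfolding deg_def by auto
    then show "\<beta> \<in> PiE UNIV (\<lambda>_. {..N})" by (auto simp: PiE_def extensional_def)
  qed
  have "(\<Sum>\<beta>\<in>Aset N. (1/2::real) ^ deg (\<beta>::'i\<Rightarrow>nat)) \<le> (\<Sum>\<beta>\<in>PiE (UNIV::'i set) (\<lambda>_. {..N}). (1/2) ^ deg \<beta>)"
    by (rule sum_mono2) (use sub in \<open>auto intro: finite_PiE\<close>)
  also have "\<dots> = (\<Sum>\<beta>\<in>PiE (UNIV::'i set) (\<lambda>_. {..N}). \<Prod>i\<in>UNIV. (1/2) ^ \<beta> i)"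
    by (simp add: pow_deg_prod)
  also have "\<dots> = (\<Prod>i\<in>(UNIV::'i set). \<Sum>k\<le>N. (1/2) ^ k)"
    by (rule prod_sum_PiE[symmetric]) auto
  also have "\<dots> \<le> (\<Prod>i\<in>(UNIV::'i set). 2)"
    by (rule prod_mono) (use half_geom in \<open>auto intro: sum_nonneg\<close>)
  also have "\<dots> = 2 ^ CARD('i)" by simp
  finally show ?thesis .
qed

lemma pow_bound1: assumes "0 \<le> z" "z \<le> 1/2" "d \<ge> 1" shows "(z::real) ^ d \<le> 2 * z * (1/2) ^ d"
proof -
  obtain e where d: "d = Suc e" using assms(3) by (cases d) auto
  have "z ^ e \<le> (1/2) ^ e" using assms by (intro power_mono) auto
  then have "z * z ^ e \<le> z * (1/2) ^ e" using assms by (intro mult_left_mono) auto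
  then show ?thesis unfolding d by simp
qed

lemma pow_bound2: assumes "0 \<le> w" "w \<le> 1/2" "d \<ge> 2" shows "(w::real) ^ d \<le> 4 * w^2 * (1/2) ^ d"
proof -
  obtain e where d: "d = Suc (Suc e)" using assms(3) by (metis add_2_eq_Suc le_Suc_ex)
  have "w ^ e \<le> (1/2) ^ e" using assms by (intro power_mono) auto
  then have "w^2 * w ^ e \<le> w^2 * (1/2) ^ e" using assms by (intro mult_left_mono) auto
  then show ?thesis unfolding d by (simp add: power2_eq_square)
qed

definition Pb :: "('n::finite \<Rightarrow> ('m \<Rightarrow> nat) \<Rightarrow> complex) \<Rightarrow> ('m \<Rightarrow> nat) \<Rightarrow> real" where
  "Pb b \<alpha> = (\<Sum>j\<in>UNIV. cmod (b j \<alpha>))"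

definition Pt :: "('n::finite \<Rightarrow> ('m::finite \<Rightarrow> nat) \<Rightarrow> complex) \<Rightarrow> nat \<Rightarrow> ('m \<Rightarrow> nat) \<Rightarrow> real" where
  "Pt b N \<beta> = (if deg \<beta> < N then Pb b \<beta> else 0)"

lemma Pb_nonneg: "Pb b \<alpha> \<ge> 0" unfolding Pb_def by (simp add: sum_nonneg)
lemma Pt_nonneg: "Pt b N \<alpha> \<ge> 0" unfolding Pt_def by (simp add: Pb_nonneg)

lemma coeff_le:
  assumes "\<rho> > 0" "cmod cc * \<rho> ^ (a + d) \<le> M"
  shows "cmod cc \<le> M * (1/\<rho>) ^ a * (1/\<rho>) ^ d"
proof -
  have p: "\<rho> ^ (a + d) > 0" using assms by simp
  have "cmod cc \<le> M / \<rho> ^ (a + d)" using assms p by (simp add: field_simps)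
  also have "\<dots> = M * (1/\<rho>) ^ a * (1/\<rho>) ^ d" by (simp add: power_add field_simps)
  finally show ?thesis .
qed

lemma alpha_bound:
  fixes q :: "'m::finite \<Rightarrow> complex" and c :: "'n::finite \<Rightarrow> ('m\<Rightarrow>nat) \<Rightarrow> ('n\<Rightarrow>nat) \<Rightarrow> complex"
    and b :: "'n \<Rightarrow> ('m \<Rightarrow> nat) \<Rightarrow> complex" and M :: real
  assumes b0: "\<forall>j. b j z0 = 0"
    and eq: "\<forall>\<alpha> j. \<alpha> \<noteq> z0 \<longrightarrow> tpow q \<alpha> * b j \<alpha> - (\<Sum>k\<in>UNIV. Dm c j k * b k \<alpha>) = restc (c j) b \<alpha>"
    and eps: "\<epsilon> > 0" "\<forall>v. \<epsilon> * (\<Sum>j\<in>UNIV. cmod (v j)) \<le> gL (Dm c) (tpow q \<alpha>) v"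
    and cb: "\<rho> > 0" "\<forall>j \<beta> \<gamma>. cmod (c j \<beta> \<gamma>) * \<rho> ^ (deg \<beta> + deg \<gamma>) \<le> M"
    and a: "\<alpha> \<noteq> z0" "deg \<alpha> \<le> N"
  shows "Pb b \<alpha> \<le> (CARD('n) * M / \<epsilon>) *
     (\<Sum>\<beta>\<in>{\<beta>. \<forall>i. \<beta> i \<le> \<alpha> i}. \<Sum>\<gamma>\<in>{\<gamma>::'n\<Rightarrow>nat. sum \<gamma> UNIV \<le> sum \<alpha> UNIV}.
        if excl \<beta> \<gamma> then 0 else (1/\<rho>) ^ deg \<beta> * (1/\<rho>) ^ deg \<gamma> * monoR (Pt b N) \<gamma> (\<lambda>i. \<alpha> i - \<beta> i))"
    (is "_ \<le> _ * ?S")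
proof -
  define bt where "bt = (\<lambda>k \<beta>. if deg \<beta> < N then b k \<beta> else 0)"
  have bt0: "\<forall>k. bt k z0 = 0" unfolding bt_def using b0 by simp
  have ag: "\<forall>k \<beta>. deg \<beta> < deg \<alpha> \<longrightarrow> b k \<beta> = bt k \<beta>" unfolding bt_def using a by auto
  have btb: "cmod (bt k \<beta>) \<le> Pt b N \<beta>" for k \<beta>
    unfolding bt_def Pt_def Pb_def by (auto intro: member_le_sum)
  have M0: "M \<ge> 0"
  proof -
    have "0 \<le> cmod (c undefined z0 z0) * \<rho> ^ (deg (z0::'m\<Rightarrow>nat) + deg (z0::'n\<Rightarrow>nat))" using cb(1) by simp
    moreover have "cmod (c undefined z0 z0) * \<rho> ^ (deg (z0::'m\<Rightarrow>nat) + deg (z0::'n\<Rightarrow>nat)) \<le> M"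
      using cb(2) by blast
    ultimately show ?thesis by linarith
  qed
  have rj: "cmod (restc (c j) b \<alpha>) \<le> M * ?S" for j
  proof -
    have "restc (c j) b \<alpha> = restc (c j) bt \<alpha>" by (rule restc_dep[OF b0 bt0 ag])
    also have "cmod \<dots> \<le> (\<Sum>\<beta>\<in>{\<beta>. \<forall>i. \<beta> i \<le> \<alpha> i}. \<Sum>\<gamma>\<in>{\<gamma>::'n\<Rightarrow>nat. sum \<gamma> UNIV \<le> sum \<alpha> UNIV}.
        cmod (if excl \<beta> \<gamma> then 0 else c j \<beta> \<gamma> * mono_coeff bt \<gamma> (\<lambda>i. \<alpha> i - \<beta> i)))"
      unfolding restc_def by (rule order.trans[OF norm_sum sum_mono[OF norm_sum]])
    also have "\<dots> \<le> (\<Sum>\<beta>\<in>{\<beta>. \<forall>i. \<beta> i \<le> \<alpha> i}. \<Sum>\<gamma>\<in>{\<gamma>::'n\<Rightarrow>nat. sum \<gamma> UNIV \<le> sum \<alpha> UNIV}.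
        M * (if excl \<beta> \<gamma> then 0 else (1/\<rho>) ^ deg \<beta> * (1/\<rho>) ^ deg \<gamma> * monoR (Pt b N) \<gamma> (\<lambda>i. \<alpha> i - \<beta> i)))"
    proof (intro sum_mono)
      fix \<beta> :: "'m \<Rightarrow> nat" and \<gamma> :: "'n \<Rightarrow> nat"
      assume "\<beta> \<in> {\<beta>. \<forall>i. \<beta> i \<le> \<alpha> i}" "\<gamma> \<in> {\<gamma>. sum \<gamma> UNIV \<le> sum \<alpha> UNIV}"
      show "cmod (if excl \<beta> \<gamma> then 0 else c j \<beta> \<gamma> * mono_coeff bt \<gamma> (\<lambda>i. \<alpha> i - \<beta> i))
          \<le> M * (if excl \<beta> \<gamma> then 0 else (1/\<rho>) ^ deg \<beta> * (1/\<rho>) ^ deg \<gamma> * monoR (Pt b N) \<gamma> (\<lambda>i. \<alpha> i - \<beta> i))"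
      proof (cases "excl \<beta> \<gamma>")
        case False
        have c1: "cmod (c j \<beta> \<gamma>) \<le> M * (1/\<rho>) ^ deg \<beta> * (1/\<rho>) ^ deg \<gamma>"
          using coeff_le[OF cb(1)] cb(2) by blast
        have c2: "cmod (mono_coeff bt \<gamma> (\<lambda>i. \<alpha> i - \<beta> i)) \<le> monoR (Pt b N) \<gamma> (\<lambda>i. \<alpha> i - \<beta> i)"
          by (rule norm_mono_coeff_le[OF btb])
        have "cmod (c j \<beta> \<gamma> * mono_coeff bt \<gamma> (\<lambda>i. \<alpha> i - \<beta> i))
           \<le> (M * (1/\<rho>) ^ deg \<beta> * (1/\<rho>) ^ deg \<gamma>) * monoR (Pt b N) \<gamma> (\<lambda>i. \<alpha> i - \<beta> i)"
          unfolding norm_mult by (rule mult_mono[OF c1 c2]) (use M0 cb(1) in auto)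
        then show ?thesis using False by (simp add: mult_ac)
      qed simp
    qed
    also have "\<dots> = M * ?S" by (simp add: sum_distrib_left)
    finally show ?thesis .
  qed
  have "\<epsilon> * Pb b \<alpha> \<le> gL (Dm c) (tpow q \<alpha>) (\<lambda>j. b j \<alpha>)" using eps(2)[rule_format, of "\<lambda>j. b j \<alpha>"] unfolding Pb_def by simp
  also have "\<dots> = (\<Sum>j\<in>UNIV. cmod (restc (c j) b \<alpha>))" unfolding gL_def using eq a by simp
  also have "\<dots> \<le> (\<Sum>j\<in>(UNIV::'n set). M * ?S)" by (rule sum_mono[OF rj])
  also have "\<dots> = CARD('n) * M * ?S" by simp
  finally have "\<epsilon> * Pb b \<alpha> \<le> CARD('n) * M * ?S" .
  then show ?thesis using eps(1) by (simp add: field_simps)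
qed

definition PhiS :: "('n::finite \<Rightarrow> ('m::finite \<Rightarrow> nat) \<Rightarrow> complex) \<Rightarrow> real \<Rightarrow> nat \<Rightarrow> real" where
  "PhiS b x N = (\<Sum>\<alpha>\<in>Aset N. Pb b \<alpha> * x ^ deg \<alpha>)"

lemma PhiS_nonneg: "x \<ge> 0 \<Longrightarrow> PhiS b x N \<ge> 0"
  unfolding PhiS_def by (intro sum_nonneg mult_nonneg_nonneg Pb_nonneg) auto

lemma PhiS_Pt:
  fixes b :: "'n::finite \<Rightarrow> ('m::finite \<Rightarrow> nat) \<Rightarrow> complex"
  assumes "N \<ge> 1"
  shows "(\<Sum>\<beta>\<in>Aset N. Pt b N \<beta> * x ^ deg \<beta>) = PhiS b x (N - 1)"
proof -
  have "(\<Sum>\<beta>\<in>Aset N. Pt b N \<beta> * x ^ deg \<beta>) = (\<Sum>\<beta>\<in>Aset N. if \<beta> \<in> Aset (N - 1) then Pb b \<beta> * x ^ deg \<beta> else 0)"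
    unfolding Pt_def using assms by (intro sum.cong refl) auto
  also have "\<dots> = (\<Sum>\<beta>\<in>Aset N \<inter> Aset (N - 1). Pb b \<beta> * x ^ deg \<beta>)"
    by (subst sum.inter_restrict) auto
  also have "Aset N \<inter> Aset (N - 1) = (Aset (N - 1) :: ('m \<Rightarrow> nat) set)" by auto
  finally show ?thesis unfolding PhiS_def .
qed

lemma term_bound:
  assumes z: "0 \<le> z" "z \<le> 1/2" and w: "0 \<le> w" "w \<le> 1/2" and ne: "\<not> excl \<beta> \<gamma>"
  shows "(z::real) ^ deg \<beta> * w ^ deg \<gamma> \<le> (4 * w^2 + 2 * z) * ((1/2) ^ deg \<beta> * (1/2) ^ deg \<gamma>)"
proof (cases "\<beta> = z0")
  case True
  with ne have "\<gamma> \<noteq> z0" "\<gamma> \<notin> range ek" unfolding excl_def by auto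
  then have "deg \<gamma> \<ge> 2" by (rule deg_ge2)
  then have "w ^ deg \<gamma> \<le> 4 * w^2 * (1/2) ^ deg \<gamma>" using w by (rule pow_bound2[rotated 2])
  also have "\<dots> \<le> (4 * w^2 + 2 * z) * (1/2) ^ deg \<gamma>" using z by (intro mult_right_mono) auto
  finally show ?thesis using True by simp
next
  case False
  then have "deg \<beta> \<ge> 1" using deg_zero_iff by (metis less_one not_le)
  then have "z ^ deg \<beta> \<le> 2 * z * (1/2) ^ deg \<beta>" using z by (rule pow_bound1[rotated 2])
  moreover have "w ^ deg \<gamma> \<le> (1/2) ^ deg \<gamma>" using w by (intro power_mono) auto
  ultimately have "z ^ deg \<beta> * w ^ deg \<gamma> \<le> (2 * z * (1/2) ^ deg \<beta>) * (1/2) ^ deg \<gamma>"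
    using z w by (intro mult_mono) auto
  also have "\<dots> \<le> (4 * w^2 + 2 * z) * ((1/2) ^ deg \<beta> * (1/2) ^ deg \<gamma>)"
    by (simp add: mult_ac mult_right_mono)
  finally show ?thesis .
qed

lemma Phi_step:
  fixes q :: "'m::finite \<Rightarrow> complex" and c :: "'n::finite \<Rightarrow> ('m\<Rightarrow>nat) \<Rightarrow> ('n\<Rightarrow>nat) \<Rightarrow> complex"
    and b :: "'n \<Rightarrow> ('m \<Rightarrow> nat) \<Rightarrow> complex" and M :: real
  assumes b0: "\<forall>j. b j z0 = 0"
    and eq: "\<forall>\<alpha> j. \<alpha> \<noteq> z0 \<longrightarrow> tpow q \<alpha> * b j \<alpha> - (\<Sum>k\<in>UNIV. Dm c j k * b k \<alpha>) = restc (c j) b \<alpha>"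
    and eps: "\<epsilon> > 0" "\<forall>\<alpha>. \<alpha> \<noteq> z0 \<longrightarrow> (\<forall>v. \<epsilon> * (\<Sum>j\<in>UNIV. cmod (v j)) \<le> gL (Dm c) (tpow q \<alpha>) v)"
    and cb: "\<rho> > 0" "\<forall>j \<beta> \<gamma>. cmod (c j \<beta> \<gamma>) * \<rho> ^ (deg \<beta> + deg \<gamma>) \<le> M"
    and x: "x \<ge> 0" "x / \<rho> \<le> 1/2" and N: "N \<ge> 1"
    and w: "PhiS b x (N - 1) / \<rho> \<le> 1/2"
  shows "PhiS b x N \<le> (CARD('n) * M / \<epsilon>) * 2 ^ (CARD('m) + CARD('n)) *
           (4 * (PhiS b x (N - 1) / \<rho>)^2 + 2 * (x / \<rho>))"
proof -
  define K0 where "K0 = CARD('n) * M / \<epsilon>"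
  have M0: "M \<ge> 0"
  proof -
    have "0 \<le> cmod (c undefined z0 z0) * \<rho> ^ (deg (z0::'m\<Rightarrow>nat) + deg (z0::'n\<Rightarrow>nat))" using cb(1) by simp
    moreover have "cmod (c undefined z0 z0) * \<rho> ^ (deg (z0::'m\<Rightarrow>nat) + deg (z0::'n\<Rightarrow>nat)) \<le> M"
      using cb(2) by blast
    ultimately show ?thesis by linarith
  qed
  have K0: "K0 \<ge> 0" unfolding K0_def using M0 eps(1) by simp
  define i\<rho> where "i\<rho> = 1 / \<rho>"
  have ir: "i\<rho> > 0" unfolding i\<rho>_def using cb(1) by simp
  define E where "E = (\<lambda>(\<beta>::'m\<Rightarrow>nat) (\<gamma>::'n\<Rightarrow>nat) (\<alpha>'::'m\<Rightarrow>nat).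
     if excl \<beta> \<gamma> then 0 else i\<rho> ^ deg \<beta> * i\<rho> ^ deg \<gamma> * monoR (Pt b N) \<gamma> \<alpha>' * x ^ deg \<beta> * x ^ deg \<alpha>')"
  have E0: "E \<beta> \<gamma> \<alpha>' \<ge> 0" for \<beta> \<gamma> \<alpha>'
    unfolding E_def using ir x by (auto intro!: mult_nonneg_nonneg monoR_nonneg Pt_nonneg)
  define S where "S = (\<lambda>\<alpha>::'m\<Rightarrow>nat. \<Sum>\<beta>\<in>{\<beta>. \<forall>i. \<beta> i \<le> \<alpha> i}. \<Sum>\<gamma>\<in>{\<gamma>::'n\<Rightarrow>nat. sum \<gamma> UNIV \<le> sum \<alpha> UNIV}.
        if excl \<beta> \<gamma> then 0 else (1/\<rho>) ^ deg \<beta> * (1/\<rho>) ^ deg \<gamma> * monoR (Pt b N) \<gamma> (\<lambda>i. \<alpha> i - \<beta> i))"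
  have S0: "S \<alpha> \<ge> 0" for \<alpha>
    unfolding S_def using cb(1) by (auto intro!: sum_nonneg mult_nonneg_nonneg monoR_nonneg Pt_nonneg)
  let ?G = "Aset N :: ('n \<Rightarrow> nat) set"
  let ?A = "Aset N :: ('m \<Rightarrow> nat) set"
  have step1: "PhiS b x N \<le> (\<Sum>\<alpha>\<in>?A. K0 * (S \<alpha> * x ^ deg \<alpha>))"
    unfolding PhiS_def
  proof (rule sum_mono)
    fix \<alpha> :: "'m \<Rightarrow> nat" assume "\<alpha> \<in> ?A"
    then have dN: "deg \<alpha> \<le> N" by simp
    show "Pb b \<alpha> * x ^ deg \<alpha> \<le> K0 * (S \<alpha> * x ^ deg \<alpha>)"
    proof (cases "\<alpha> = z0")
      case True
      then show ?thesis using b0 K0 S0 x by (simp add: Pb_def)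
    next
      case False
      have "Pb b \<alpha> \<le> K0 * S \<alpha>" unfolding K0_def S_def
        by (rule alpha_bound[OF b0 eq eps(1) _ cb False dN]) (use eps(2) False in blast)
      then show ?thesis using x by (simp add: mult_right_mono mult.assoc[symmetric])
    qed
  qed
  have step2: "S \<alpha> * x ^ deg \<alpha> \<le> (\<Sum>\<beta>\<in>{\<beta>. \<forall>i. \<beta> i \<le> \<alpha> i}. \<Sum>\<gamma>\<in>?G. E \<beta> \<gamma> (\<lambda>i. \<alpha> i - \<beta> i))"
    if a: "\<alpha> \<in> ?A" for \<alpha>
  proof -
    have "S \<alpha> * x ^ deg \<alpha> = (\<Sum>\<beta>\<in>{\<beta>. \<forall>i. \<beta> i \<le> \<alpha> i}. \<Sum>\<gamma>\<in>{\<gamma>::'n\<Rightarrow>nat. sum \<gamma> UNIV \<le> sum \<alpha> UNIV}.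
         E \<beta> \<gamma> (\<lambda>i. \<alpha> i - \<beta> i))"
      unfolding S_def sum_distrib_right
    proof (intro sum.cong refl)
      fix \<beta> :: "'m \<Rightarrow> nat" and \<gamma> :: "'n \<Rightarrow> nat" assume "\<beta> \<in> {\<beta>. \<forall>i. \<beta> i \<le> \<alpha> i}"
      then have "deg (\<lambda>i. \<alpha> i - \<beta> i) + deg \<beta> = deg \<alpha>" by (intro deg_diff) auto
      then have xa: "x ^ deg \<alpha> = x ^ deg \<beta> * x ^ deg (\<lambda>i. \<alpha> i - \<beta> i)" by (metis power_add mult.commute)
      show "(if excl \<beta> \<gamma> then 0 else (1/\<rho>) ^ deg \<beta> * (1/\<rho>) ^ deg \<gamma> * monoR (Pt b N) \<gamma> (\<lambda>i. \<alpha> i - \<beta> i)) * x ^ deg \<alpha>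
          = E \<beta> \<gamma> (\<lambda>i. \<alpha> i - \<beta> i)"
        unfolding E_def i\<rho>_def xa by (simp add: mult_ac)
    qed
    also have "\<dots> \<le> (\<Sum>\<beta>\<in>{\<beta>. \<forall>i. \<beta> i \<le> \<alpha> i}. \<Sum>\<gamma>\<in>?G. E \<beta> \<gamma> (\<lambda>i. \<alpha> i - \<beta> i))"
    proof (intro sum_mono sum_mono2)
      show "finite ?G" by simp
      show "{\<gamma>::'n\<Rightarrow>nat. sum \<gamma> UNIV \<le> sum \<alpha> UNIV} \<subseteq> ?G" using a unfolding deg_def by auto
    qed (rule E0)
    finally show ?thesis .
  qed
  have "PhiS b x N \<le> K0 * (\<Sum>\<alpha>\<in>?A. \<Sum>\<beta>\<in>{\<beta>. \<forall>i. \<beta> i \<le> \<alpha> i}. \<Sum>\<gamma>\<in>?G. E \<beta> \<gamma> (\<lambda>i. \<alpha> i - \<beta> i))"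
  proof -
    have "(\<Sum>\<alpha>\<in>?A. K0 * (S \<alpha> * x ^ deg \<alpha>)) \<le> (\<Sum>\<alpha>\<in>?A. K0 * (\<Sum>\<beta>\<in>{\<beta>. \<forall>i. \<beta> i \<le> \<alpha> i}. \<Sum>\<gamma>\<in>?G. E \<beta> \<gamma> (\<lambda>i. \<alpha> i - \<beta> i)))"
      by (rule sum_mono, rule mult_left_mono[OF step2 K0])
    then show ?thesis using step1 by (simp add: sum_distrib_left)
  qed
  also have "(\<Sum>\<alpha>\<in>?A. \<Sum>\<beta>\<in>{\<beta>. \<forall>i. \<beta> i \<le> \<alpha> i}. \<Sum>\<gamma>\<in>?G. E \<beta> \<gamma> (\<lambda>i. \<alpha> i - \<beta> i))
      \<le> (\<Sum>\<beta>\<in>?A. \<Sum>\<alpha>'\<in>?A. \<Sum>\<gamma>\<in>?G. E \<beta> \<gamma> \<alpha>')"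
    by (rule reindex_bound[where F = "\<lambda>\<beta> \<alpha>'. \<Sum>\<gamma>\<in>?G. E \<beta> \<gamma> \<alpha>'"]) (intro sum_nonneg E0)
  also have "(\<Sum>\<beta>\<in>?A. \<Sum>\<alpha>'\<in>?A. \<Sum>\<gamma>\<in>?G. E \<beta> \<gamma> \<alpha>')
     = (\<Sum>\<beta>\<in>?A. \<Sum>\<gamma>\<in>?G. if excl \<beta> \<gamma> then 0 else
          (i\<rho> * x) ^ deg \<beta> * i\<rho> ^ deg \<gamma> * (\<Sum>\<alpha>'\<in>?A. x ^ deg \<alpha>' * monoR (Pt b N) \<gamma> \<alpha>'))"
  proof (rule sum.cong[OF refl])
    fix \<beta> :: "'m \<Rightarrow> nat"
    have "(\<Sum>\<alpha>'\<in>?A. \<Sum>\<gamma>\<in>?G. E \<beta> \<gamma> \<alpha>') = (\<Sum>\<gamma>\<in>?G. \<Sum>\<alpha>'\<in>?A. E \<beta> \<gamma> \<alpha>')"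
      by (rule sum.swap)
    also have "\<dots> = (\<Sum>\<gamma>\<in>?G. if excl \<beta> \<gamma> then 0 else
          (i\<rho> * x) ^ deg \<beta> * i\<rho> ^ deg \<gamma> * (\<Sum>\<alpha>'\<in>?A. x ^ deg \<alpha>' * monoR (Pt b N) \<gamma> \<alpha>'))"
      unfolding E_def by (intro sum.cong refl) (simp add: sum_distrib_left power_mult_distrib mult_ac)
    finally show "(\<Sum>\<alpha>'\<in>?A. \<Sum>\<gamma>\<in>?G. E \<beta> \<gamma> \<alpha>') = (\<Sum>\<gamma>\<in>?G. if excl \<beta> \<gamma> then 0 else
          (i\<rho> * x) ^ deg \<beta> * i\<rho> ^ deg \<gamma> * (\<Sum>\<alpha>'\<in>?A. x ^ deg \<alpha>' * monoR (Pt b N) \<gamma> \<alpha>'))" .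
  qed
  also have "\<dots> \<le> (\<Sum>\<beta>\<in>?A. \<Sum>\<gamma>\<in>?G. if excl \<beta> \<gamma> then 0 else
          (i\<rho> * x) ^ deg \<beta> * (i\<rho> * PhiS b x (N - 1)) ^ deg \<gamma>)"
  proof (intro sum_mono)
    fix \<beta> :: "'m \<Rightarrow> nat" and \<gamma> :: "'n \<Rightarrow> nat"
    have mg: "(\<Sum>\<alpha>'\<in>?A. x ^ deg \<alpha>' * monoR (Pt b N) \<gamma> \<alpha>') \<le> PhiS b x (N - 1) ^ deg \<gamma>"
      using monoR_gen_bound[where P="Pt b N" and x=x and N=N and \<gamma>=\<gamma>, OF x(1) Pt_nonneg] PhiS_Pt[OF N, of b x] by simp
    have "i\<rho> ^ deg \<gamma> * (\<Sum>\<alpha>'\<in>?A. x ^ deg \<alpha>' * monoR (Pt b N) \<gamma> \<alpha>') \<le> i\<rho> ^ deg \<gamma> * PhiS b x (N - 1) ^ deg \<gamma>"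
      using ir by (intro mult_left_mono[OF mg]) auto
    then have "(i\<rho> * x) ^ deg \<beta> * i\<rho> ^ deg \<gamma> * (\<Sum>\<alpha>'\<in>?A. x ^ deg \<alpha>' * monoR (Pt b N) \<gamma> \<alpha>')
        \<le> (i\<rho> * x) ^ deg \<beta> * (i\<rho> * PhiS b x (N - 1)) ^ deg \<gamma>"
      using ir x by (simp add: mult.assoc power_mult_distrib mult_left_mono)
    then show "(if excl \<beta> \<gamma> then 0 else
          (i\<rho> * x) ^ deg \<beta> * i\<rho> ^ deg \<gamma> * (\<Sum>\<alpha>'\<in>?A. x ^ deg \<alpha>' * monoR (Pt b N) \<gamma> \<alpha>'))
        \<le> (if excl \<beta> \<gamma> then 0 else (i\<rho> * x) ^ deg \<beta> * (i\<rho> * PhiS b x (N - 1)) ^ deg \<gamma>)"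
      by simp
  qed
  also have "\<dots> \<le> (\<Sum>\<beta>\<in>?A. \<Sum>\<gamma>\<in>?G. (4 * (i\<rho> * PhiS b x (N - 1))^2 + 2 * (i\<rho> * x)) *
          ((1/2) ^ deg \<beta> * (1/2) ^ deg \<gamma>))"
  proof (intro sum_mono)
    fix \<beta> :: "'m \<Rightarrow> nat" and \<gamma> :: "'n \<Rightarrow> nat"
    have z: "0 \<le> i\<rho> * x" "i\<rho> * x \<le> 1/2" using ir x unfolding i\<rho>_def by auto
    have w': "0 \<le> i\<rho> * PhiS b x (N - 1)" "i\<rho> * PhiS b x (N - 1) \<le> 1/2"
      using ir w PhiS_nonneg[OF x(1), of b "N - 1"] unfolding i\<rho>_def by (auto simp: divide_nonneg_pos)
    show "(if excl \<beta> \<gamma> then 0 else (i\<rho> * x) ^ deg \<beta> * (i\<rho> * PhiS b x (N - 1)) ^ deg \<gamma>)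
        \<le> (4 * (i\<rho> * PhiS b x (N - 1))^2 + 2 * (i\<rho> * x)) * ((1/2) ^ deg \<beta> * (1/2) ^ deg \<gamma>)"
    proof (cases "excl \<beta> \<gamma>")
      case True then show ?thesis using z w' by simp
    next
      case False then show ?thesis using term_bound[OF z w' False] by simp
    qed
  qed
  also have "\<dots> = (4 * (i\<rho> * PhiS b x (N - 1))^2 + 2 * (i\<rho> * x)) *
      ((\<Sum>\<beta>\<in>?A. (1/2) ^ deg \<beta>) * (\<Sum>\<gamma>\<in>?G. (1/2) ^ deg \<gamma>))"
    by (subst sum_product) (simp only: sum_distrib_left)
  also have "\<dots> \<le> (4 * (i\<rho> * PhiS b x (N - 1))^2 + 2 * (i\<rho> * x)) * (2 ^ CARD('m) * 2 ^ CARD('n))"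
  proof (rule mult_left_mono)
    show "(\<Sum>\<beta>\<in>?A. (1/2::real) ^ deg \<beta>) * (\<Sum>\<gamma>\<in>?G. (1/2) ^ deg \<gamma>) \<le> 2 ^ CARD('m) * 2 ^ CARD('n)"
      using half_sum[of N, where 'i='m] half_sum[of N, where 'i='n]
      by (intro mult_mono) (auto intro: sum_nonneg)
    show "0 \<le> 4 * (i\<rho> * PhiS b x (N - 1))^2 + 2 * (i\<rho> * x)" using ir x by simp
  qed
  finally have "PhiS b x N \<le> K0 * ((4 * (i\<rho> * PhiS b x (N - 1))^2 + 2 * (i\<rho> * x)) * (2 ^ CARD('m) * 2 ^ CARD('n)))"
    using K0 by (simp add: mult_left_mono)
  then show ?thesis unfolding K0_def i\<rho>_def by (simp add: power_add mult_ac)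
qed



lemma Aset0: "Aset 0 = {z0::'i::finite \<Rightarrow> nat}"
  using deg_zero_iff by auto

lemma half_summable: "(\<lambda>\<alpha>::'i::finite \<Rightarrow> nat. T * (1/2::real) ^ deg \<alpha>) summable_on UNIV" if "T \<ge> 0"
proof (rule nonneg_bdd_above_summable_on)
  show "\<And>x. x \<in> UNIV \<Longrightarrow> 0 \<le> T * (1/2::real) ^ deg x" using that by simp
  show "bdd_above (sum (\<lambda>\<alpha>::'i \<Rightarrow> nat. T * (1/2::real) ^ deg \<alpha>) ` {F. F \<subseteq> UNIV \<and> finite F})"
  proof (rule bdd_aboveI[of _ "T * 2 ^ CARD('i)"])
    fix s assume "s \<in> sum (\<lambda>\<alpha>::'i \<Rightarrow> nat. T * (1/2::real) ^ deg \<alpha>) ` {F. F \<subseteq> UNIV \<and> finite F}"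
    then obtain F :: "('i \<Rightarrow> nat) set" where F: "finite F" "s = (\<Sum>\<alpha>\<in>F. T * (1/2) ^ deg \<alpha>)" by auto
    define N where "N = (\<Sum>\<alpha>\<in>F. deg \<alpha>)"
    have sub: "F \<subseteq> Aset N"
    proof
      fix \<alpha> assume "\<alpha> \<in> F"
      then have "deg \<alpha> \<le> N" unfolding N_def using F(1) by (intro member_le_sum) auto
      then show "\<alpha> \<in> Aset N" by simp
    qed
    have "s \<le> (\<Sum>\<alpha>\<in>(Aset N :: ('i\<Rightarrow>nat) set). T * (1/2) ^ deg \<alpha>)" unfolding F(2)
      by (rule sum_mono2) (use sub that in auto)
    also have "\<dots> = T * (\<Sum>\<alpha>\<in>Aset N. (1/2) ^ deg (\<alpha>::'i\<Rightarrow>nat))" by (simp add: sum_distrib_left)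
    also have "\<dots> \<le> T * 2 ^ CARD('i)" using half_sum[of N, where 'i='i] that by (intro mult_left_mono) auto
    finally show "s \<le> T * 2 ^ CARD('i)" .
  qed
qed

lemma norm_tpow_le: assumes "\<forall>i. cmod (t i) \<le> r0" shows "cmod (tpow t \<alpha>) \<le> r0 ^ deg \<alpha>"
proof -
  have "cmod (tpow t \<alpha>) = (\<Prod>i\<in>UNIV. cmod (t i) ^ \<alpha> i)" unfolding tpow_def by (simp add: prod_norm[symmetric] norm_power)
  also have "\<dots> \<le> (\<Prod>i\<in>UNIV. r0 ^ \<alpha> i)" using assms by (intro prod_mono conjI power_mono) auto
  also have "\<dots> = r0 ^ deg \<alpha>" by (simp add: pow_deg_prod)
  finally show ?thesis .
qed

lemma convergence:
  fixes q :: "'m::finite \<Rightarrow> complex" and c :: "'n::finite \<Rightarrow> ('m\<Rightarrow>nat) \<Rightarrow> ('n\<Rightarrow>nat) \<Rightarrow> complex"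
    and b :: "'n \<Rightarrow> ('m \<Rightarrow> nat) \<Rightarrow> complex" and M :: real
  assumes b0: "\<forall>j. b j z0 = 0"
    and eq: "\<forall>\<alpha> j. \<alpha> \<noteq> z0 \<longrightarrow> tpow q \<alpha> * b j \<alpha> - (\<Sum>k\<in>UNIV. Dm c j k * b k \<alpha>) = restc (c j) b \<alpha>"
    and eps: "\<epsilon> > 0" "\<forall>\<alpha>. \<alpha> \<noteq> z0 \<longrightarrow> (\<forall>v. \<epsilon> * (\<Sum>j\<in>UNIV. cmod (v j)) \<le> gL (Dm c) (tpow q \<alpha>) v)"
    and cb: "\<rho> > 0" "\<forall>j \<beta> \<gamma>. cmod (c j \<beta> \<gamma>) * \<rho> ^ (deg \<beta> + deg \<gamma>) \<le> M"
  shows "\<exists>\<rho>0>0. \<forall>t. (\<forall>i. norm (t i) < \<rho>0) \<longrightarrow> (\<forall>j. (\<lambda>\<alpha>. b j \<alpha> * tpow t \<alpha>) summable_on UNIV)"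
proof -
  have M0: "M \<ge> 0"
  proof -
    have "0 \<le> cmod (c undefined z0 z0) * \<rho> ^ (deg (z0::'m\<Rightarrow>nat) + deg (z0::'n\<Rightarrow>nat))" using cb(1) by simp
    moreover have "cmod (c undefined z0 z0) * \<rho> ^ (deg (z0::'m\<Rightarrow>nat) + deg (z0::'n\<Rightarrow>nat)) \<le> M"
      using cb(2) by blast
    ultimately show ?thesis by linarith
  qed
  define C0 where "C0 = (CARD('n) * M / \<epsilon>) * 2 ^ (CARD('m) + CARD('n))"
  have C0: "C0 \<ge> 0" unfolding C0_def using M0 eps(1) by simp
  define T where "T = min (\<rho>/2) (\<rho>^2 / (8 * C0 + 1))"
  define x where "x = min (\<rho>/2) (T * \<rho> / (4 * C0 + 1))"
  have "\<rho>/2 > 0" "\<rho>^2 / (8 * C0 + 1) > 0" using cb(1) C0 by auto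
  then have T1: "T > 0" unfolding T_def by simp
  have T2: "T \<le> \<rho>/2" unfolding T_def by (rule min.cobounded1)
  have T3: "T \<le> \<rho>^2 / (8 * C0 + 1)" unfolding T_def by (rule min.cobounded2)
  note T = T1 T2 T3
  have "\<rho>/2 > 0" "T * \<rho> / (4 * C0 + 1) > 0" using cb(1) C0 T by auto
  then have x1: "x > 0" unfolding x_def by simp
  have x2: "x \<le> \<rho>/2" unfolding x_def by (rule min.cobounded1)
  have x3: "x \<le> T * \<rho> / (4 * C0 + 1)" unfolding x_def by (rule min.cobounded2)
  note x = x1 x2 x3
  have xr: "x / \<rho> \<le> 1/2" using x cb(1) by (simp add: field_simps)
  have key: "C0 * (4 * (P / \<rho>)^2 + 2 * (x / \<rho>)) \<le> T" if P: "0 \<le> P" "P \<le> T" for P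
  proof -
    have r: "\<rho> > 0" by (rule cb(1))
    have "(P / \<rho>)^2 \<le> (T / \<rho>)^2" using P r by (intro power_mono) (auto simp: divide_right_mono)
    then have a1: "C0 * (4 * (P / \<rho>)^2) \<le> C0 * (4 * (T / \<rho>)^2)" using C0 by (intro mult_left_mono) auto
    have "T * (8 * C0 + 1) \<le> \<rho>^2" using T(3) C0 by (simp add: pos_le_divide_eq)
    moreover have "T * (8 * C0 + 1) = 8 * C0 * T + T" by (simp add: algebra_simps)
    ultimately have h1: "8 * C0 * T \<le> \<rho>^2" using T(1) by linarith
    have h2: "8 * C0 * T * T \<le> \<rho>^2 * T" using mult_right_mono[OF h1, of T] T(1) by simp
    have e2: "C0 * (4 * (T / \<rho>)^2) = (8 * C0 * T * T) / (2 * \<rho>^2)" using r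
      by (simp add: power2_eq_square)
    have "(8 * C0 * T * T) / (2 * \<rho>^2) \<le> (\<rho>^2 * T) / (2 * \<rho>^2)" using h2 r
      by (intro divide_right_mono) auto
    also have "\<dots> = T / 2" using r by simp
    finally have a2: "C0 * (4 * (T / \<rho>)^2) \<le> T / 2" using e2 by simp
    have "x * (4 * C0 + 1) \<le> T * \<rho>" using x(3) C0 by (simp add: pos_le_divide_eq)
    moreover have "x * (4 * C0 + 1) = 4 * C0 * x + x" by (simp add: algebra_simps)
    ultimately have h3: "4 * C0 * x \<le> T * \<rho>" using x(1) by linarith
    have e3: "C0 * (2 * (x / \<rho>)) = (4 * C0 * x) / (2 * \<rho>)" using r by simp
    have "(4 * C0 * x) / (2 * \<rho>) \<le> (T * \<rho>) / (2 * \<rho>)" using h3 r by (intro divide_right_mono) auto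
    also have "\<dots> = T / 2" using r by simp
    finally have a3: "C0 * (2 * (x / \<rho>)) \<le> T / 2" using e3 by simp
    have "C0 * (4 * (P / \<rho>)^2 + 2 * (x / \<rho>)) = C0 * (4 * (P / \<rho>)^2) + C0 * (2 * (x / \<rho>))"
      by (simp add: algebra_simps)
    with a1 a2 a3 show ?thesis by linarith
  qed
  have PhiT: "PhiS b x N \<le> T" for N
  proof (induction N)
    case 0
    have "PhiS b x 0 = 0" unfolding PhiS_def Aset0 using b0 by (simp add: Pb_def)
    then show ?case using T by simp
  next
    case (Suc N)
    have P0: "0 \<le> PhiS b x N" by (rule PhiS_nonneg) (use x in simp)
    have w: "PhiS b x (Suc N - 1) / \<rho> \<le> 1/2" using Suc.IH T cb(1) by (simp add: field_simps)
    have "PhiS b x (Suc N) \<le> (CARD('n) * M / \<epsilon>) * 2 ^ (CARD('m) + CARD('n)) *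
           (4 * (PhiS b x (Suc N - 1) / \<rho>)^2 + 2 * (x / \<rho>))"
      by (rule Phi_step[OF b0 eq eps cb _ xr _ w]) (use x in auto)
    also have "\<dots> = C0 * (4 * (PhiS b x N / \<rho>)^2 + 2 * (x / \<rho>))" unfolding C0_def by simp
    also have "\<dots> \<le> T" by (rule key[OF P0 Suc.IH])
    finally show ?case .
  qed
  have Pbound: "Pb b \<alpha> * x ^ deg \<alpha> \<le> T" for \<alpha>
  proof -
    have "Pb b \<alpha> * x ^ deg \<alpha> \<le> PhiS b x (deg \<alpha>)" unfolding PhiS_def
      by (rule member_le_sum) (use x in \<open>auto intro!: mult_nonneg_nonneg Pb_nonneg\<close>)
    then show ?thesis using PhiT[of "deg \<alpha>"] by linarith
  qed
  show ?thesis
  proof (intro exI[of _ "x/2"] conjI allI impI)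
    show "x/2 > 0" using x by simp
    fix t :: "'m \<Rightarrow> complex" and j assume t: "\<forall>i. cmod (t i) < x/2"
    have "(\<lambda>\<alpha>::'m\<Rightarrow>nat. T * (1/2::real) ^ deg \<alpha>) summable_on UNIV" by (rule half_summable) (use T in simp)
    moreover have e: "(\<lambda>\<alpha>::'m\<Rightarrow>nat. norm (T * (1/2::real) ^ deg \<alpha>)) = (\<lambda>\<alpha>. T * (1/2::real) ^ deg \<alpha>)"
      using T(1) by (auto simp: fun_eq_iff)
    ultimately have g: "(\<lambda>\<alpha>::'m\<Rightarrow>nat. norm (T * (1/2::real) ^ deg \<alpha>)) summable_on UNIV" by (simp only: e)
    have "(\<lambda>\<alpha>. norm (b j \<alpha> * tpow t \<alpha>)) summable_on UNIV"
    proof (rule Infinite_Sum.abs_summable_on_comparison_test[where g="\<lambda>\<alpha>. T * (1/2::real) ^ deg \<alpha>", OF g])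
      fix \<alpha> :: "'m \<Rightarrow> nat"
      have "cmod (tpow t \<alpha>) \<le> (x/2) ^ deg \<alpha>" using t by (intro norm_tpow_le) (auto intro: less_imp_le)
      moreover have "cmod (b j \<alpha>) \<le> Pb b \<alpha>" unfolding Pb_def by (rule member_le_sum) auto
      ultimately have "cmod (b j \<alpha> * tpow t \<alpha>) \<le> Pb b \<alpha> * (x/2) ^ deg \<alpha>"
        unfolding norm_mult by (intro mult_mono) (auto simp: Pb_nonneg)
      also have "\<dots> = (Pb b \<alpha> * x ^ deg \<alpha>) * (1/2) ^ deg \<alpha>" by (simp add: power_divide)
      also have "\<dots> \<le> T * (1/2) ^ deg \<alpha>" by (intro mult_right_mono Pbound) auto
      finally show "norm (b j \<alpha> * tpow t \<alpha>) \<le> norm (T * (1/2::real) ^ deg \<alpha>)" using T by simp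
    qed
    then show "(\<lambda>\<alpha>. b j \<alpha> * tpow t \<alpha>) summable_on UNIV" by (rule abs_summable_summable)
  qed
qed



theorem mainTheorem10:
  fixes q :: "'m::finite \<Rightarrow> complex"
    and H :: "'n::finite \<Rightarrow> ('m \<Rightarrow> complex) \<Rightarrow> ('n \<Rightarrow> complex) \<Rightarrow> complex"
    and c :: "'n \<Rightarrow> ('m \<Rightarrow> nat) \<Rightarrow> ('n \<Rightarrow> nat) \<Rightarrow> complex"
    and Y :: "'n \<Rightarrow> complex" and r :: real
  assumes q_nz: "\<forall>i. q i \<noteq> 0"
    and hol: "\<forall>j. power_series_at (H j) (c j) Y r"
    and fix0: "\<forall>j. H j (\<lambda>_. 0) Y = Y j"
    and nonres: "\<forall>\<mu>. is_eigenvalue (jacobian_y H Y) \<mu> \<longrightarrow> \<mu> \<notin> Qset q"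
  shows "(\<exists>!b. formal_solution q c Y b) \<and>
         ((\<forall>\<mu>. is_eigenvalue (jacobian_y H Y) \<mu> \<longrightarrow> \<not> (\<mu> islimpt Qset q)) \<longrightarrow>
           (\<forall>b. formal_solution q c Y b \<longrightarrow>
              (\<exists>\<rho>>0. \<forall>t. (\<forall>i. norm (t i) < \<rho>) \<longrightarrow>
                 (\<forall>j. (\<lambda>\<alpha>. b j \<alpha> * tpow t \<alpha>) summable_on UNIV))))"
proof -
  have c00: "c j z0 z0 = Y j" for j
    by (rule c00_lemma[OF hol[rule_format, of j] fix0[rule_format, of j]])
  have jac: "jacobian_y H Y = Dm c"
  proof (intro ext)
    fix j k show "jacobian_y H Y j k = Dm c j k"
      unfolding jacobian_y_def Dm_def by (rule jac_lemma[OF hol[rule_format, of j]])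
  qed
  have inQ: "tpow q \<alpha> \<in> Qset q" if "\<alpha> \<noteq> z0" for \<alpha>
    unfolding Qset_def using that by blast
  have ne: "\<not> is_eigenvalue (Dm c) (tpow q \<alpha>)" if "\<alpha> \<noteq> z0" for \<alpha>
    using nonres inQ[OF that] unfolding jac by blast
  have part1: "\<exists>!b. formal_solution q c Y b"
    by (rule formal_eu[OF ne c00])
  have part2: "\<exists>\<rho>>0. \<forall>t. (\<forall>i. norm (t i) < \<rho>) \<longrightarrow> (\<forall>j. (\<lambda>\<alpha>. b j \<alpha> * tpow t \<alpha>) summable_on UNIV)"
    if lim: "\<forall>\<mu>. is_eigenvalue (jacobian_y H Y) \<mu> \<longrightarrow> \<not> (\<mu> islimpt Qset q)"
      and fs: "formal_solution q c Y b" for b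
  proof -
    have nc: "\<mu> \<notin> closure (Qset q)" if "is_eigenvalue (Dm c) \<mu>" for \<mu>
      using lim nonres that unfolding jac closure_def by blast
    obtain \<epsilon> where e: "\<epsilon> > 0" "\<forall>w\<in>Qset q. \<forall>v. \<epsilon> * (\<Sum>j\<in>UNIV. cmod (v j)) \<le> gL (Dm c) w v"
      using unif_lower_bound[OF nc] by blast
    have e2: "\<forall>\<alpha>. \<alpha> \<noteq> z0 \<longrightarrow> (\<forall>v. \<epsilon> * (\<Sum>j\<in>UNIV. cmod (v j)) \<le> gL (Dm c) (tpow q \<alpha>) v)"
      using e(2) inQ by blast
    have r: "r > 0" using hol unfolding power_series_at_def by blast
    have "\<forall>j. \<exists>M\<ge>0. \<forall>\<beta> \<gamma>. cmod (c j \<beta> \<gamma>) * (r/2) ^ (deg \<beta> + deg \<gamma>) \<le> M"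
      using coeff_bound hol by blast
    then obtain Mf where Mf: "\<And>j. Mf j \<ge> 0" "\<And>j \<beta> \<gamma>. cmod (c j \<beta> \<gamma>) * (r/2) ^ (deg \<beta> + deg \<gamma>) \<le> Mf j"
      by metis
    define M where "M = (\<Sum>j\<in>UNIV. Mf j)"
    have cb: "\<forall>j \<beta> \<gamma>. cmod (c j \<beta> \<gamma>) * (r/2) ^ (deg \<beta> + deg \<gamma>) \<le> M"
    proof (intro allI)
      fix j \<beta> \<gamma>
      have "Mf j \<le> M" unfolding M_def by (rule member_le_sum) (use Mf in auto)
      then show "cmod (c j \<beta> \<gamma>) * (r/2) ^ (deg \<beta> + deg \<gamma>) \<le> M" using Mf(2)[of j \<beta> \<gamma>] by linarith
    qed
    have fs': "(\<forall>j. b j z0 = 0) \<and>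
     (\<forall>\<alpha> j. \<alpha> \<noteq> z0 \<longrightarrow> tpow q \<alpha> * b j \<alpha> - (\<Sum>k\<in>UNIV. Dm c j k * b k \<alpha>) = restc (c j) b \<alpha>)"
      using fs unfolding fs_iff[of c Y, OF c00] .
    show ?thesis
      by (rule convergence[where M = M, OF conjunct1[OF fs'] conjunct2[OF fs'] e(1) e2 _ cb]) (use r in simp)
  qed
  show ?thesis using part1 part2 by blast
qed

end
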